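(* Let $n$ be odd and let $S=\{s_1<\dots<s_k\}\subseteq[n]$ be nonempty. Then \[ \sum_{i=\lfloor n/2\rfloor+1}^{n-1}(-1)^i\binom{n}{i}f_S(\check\Phi^n_i)=\binom{n}{s_k}\binom{s_k}{s_1,\,s_2-s_1,\,\dots,\,s_k-s_{k-1}}\sum_{\lfloor n/2\rfloor+1\le j\le s_k}(-1)^j\binom{s_k}{j}+\delta_{S,\{n\}}, \] where $\delta_{S,\{n\}}=1$ if $S=\{n\}$ and $0$ otherwise.
   Context: The polynomials $\check\Phi^n_i$ (in non-commuting $c,d$, homogeneous of degree $n$ with $\deg c=1,\deg d=2$): let $\Lambda^n$ be the boundary complex of an $n$-simplex with facets $\sigma_0,\dots,\sigma_n$; for $0\le i\le n-1$ let $\Gamma^n_i$ be the simplicial complex generated by $\sigma_0,\dots,\sigma_i$, and $\Lambda^n_i$ the regular CW complex obtained from $\Gamma^n_i$ by attaching one new $(n-1)$-cell $\tau$ with $\partial\tau=\partial\Gamma^n_i$. $\Phi_{\Lambda}$ denotes the $cd$-index of the face poset of $\Lambda$ with $\hat0$ and $\hat1$ adjoined (an Eulerian poset $Q$ of rank $n+1$), i.e. the polynomial with $\Phi_Q(a+b,ab+ba)=\sum_{S\subseteq[n]}h_S(Q)u_S$, where $h_S(Q)=\sum_{T\subseteq S}(-1)^{|S\setminus T|}f_T(Q)$, $f_T(Q)$ counts chains $\hat0<x_1<\dots<\hat1$ with rank set $T$, and $u_S=u_1\cdots u_n$ with $u_i=b$ for $i\in S$, $u_i=a$ otherwise. Set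 $\check\Phi^n_0=\Phi_{\Lambda^n_0}$ and $\check\Phi^n_i=\Phi_{\Lambda^n_i}-\Phi_{\Lambda^n_{i-1}}$ for $1\le i\le n-1$. The flag $f$-vector associated to a degree-$n$ $cd$-polynomial $\Phi$ is the vector $(f_S(\Phi))_{S\subseteq[n]}$ defined by $\sum_{S\subseteq[n]}f_S(\Phi)u_S=\Psi(a+b,b)$ where $\Psi(a,b)=\Phi(a+b,ab+ba)$; this is linear in $\Phi$ and $f_S(\Phi_Q)=f_S(Q)$ for Eulerian $Q$. *)

theory Defs
  imports Main
begin

text \<open>cd-words: letters c (degree 1) and d (degree 2).  A cd-polynomial is a
  function from cd-words to integer coefficients.  ab-words are bool lists,
  True = b, False = a.\<close>

datatype cdl = C | D

fun cdeg :: "cdl list \<Rightarrow> nat" where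
  "cdeg [] = 0"
| "cdeg (C # w) = Suc (cdeg w)"
| "cdeg (D # w) = Suc (Suc (cdeg w))"

type_synonym cdpoly = "cdl list \<Rightarrow> int"

text \<open>Number of ways the cd-word w turns into the ab-word u under
  c \<mapsto> a+b, d \<mapsto> ab+ba.\<close>
fun expcount :: "cdl list \<Rightarrow> bool list \<Rightarrow> nat" where
  "expcount [] [] = 1"
| "expcount (C # w) (x # u) = expcount w u"
| "expcount (D # w) (x # y # u) = (if x \<noteq> y then expcount w u else 0)"
| "expcount _ _ = 0"

definition cdwords :: "nat \<Rightarrow> cdl list set" where
  "cdwords m = {w. length w \<le> m \<and> cdeg w = m}"

text \<open>Coefficient of the ab-word u in \<Phi>(a+b, ab+ba).\<close>
definition abcoef :: "cdpoly \<Rightarrow> bool list \<Rightarrow> int" where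
  "abcoef \<Phi> u = (\<Sum>w\<in>cdwords (length u). \<Phi> w * int (expcount w u))"

definition uword :: "nat \<Rightarrow> nat set \<Rightarrow> bool list" where
  "uword n S = map (\<lambda>i. Suc i \<in> S) [0..<n]"

text \<open>Flag f-vector of a degree-n cd-polynomial: coefficient of u_S in
  \<Psi>(a+b,b), \<Psi>(a,b) = \<Phi>(a+b,ab+ba).  Substituting a \<mapsto> a+b, b \<mapsto> b, the
  ab-word u_T contributes to u_S exactly when T \<subseteq> S.\<close>
definition fvec :: "nat \<Rightarrow> cdpoly \<Rightarrow> nat set \<Rightarrow> int" where
  "fvec n \<Phi> S = (\<Sum>T\<in>Pow S. abcoef \<Phi> (uword n T))"

definition facet :: "nat \<Rightarrow> nat \<Rightarrow> nat set" where
  "facet n j = {0..n} - {j}"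

text \<open>Nonempty faces of \<Gamma>^n_i (the complex generated by \<sigma>_0..\<sigma>_i).\<close>
definition Gfaces :: "nat \<Rightarrow> nat \<Rightarrow> nat set set" where
  "Gfaces n i = {F. F \<noteq> {} \<and> (\<exists>j\<le>i. F \<subseteq> facet n j)}"

text \<open>Nonempty faces of the boundary of the pure (n-1)-dimensional complex
  \<Gamma>^n_i: faces of ridges (faces with n-1 vertices) lying in exactly one
  facet of \<Gamma>^n_i.\<close>
definition Bfaces :: "nat \<Rightarrow> nat \<Rightarrow> nat set set" where
  "Bfaces n i = {F. F \<noteq> {} \<and> (\<exists>R. F \<subseteq> R \<and> R \<subseteq> {0..n} \<and> card R = n - 1 \<and>
                        card {j. j \<le> i \<and> R \<subseteq> facet n j} = 1)}"

text \<open>Cells of \<Lambda>^n_i: Some F for a face F of \<Gamma>^n_i, None for the new cell \<tau>.\<close>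
definition cells :: "nat \<Rightarrow> nat \<Rightarrow> nat set option set" where
  "cells n i = Some ` Gfaces n i \<union> {None}"

text \<open>Rank in the face poset with \<hat>0 adjoined (rank of a cell = dim + 1).\<close>
fun crank :: "nat \<Rightarrow> nat set option \<Rightarrow> nat" where
  "crank n (Some F) = card F"
| "crank n None = n"

fun cless :: "nat \<Rightarrow> nat \<Rightarrow> nat set option \<Rightarrow> nat set option \<Rightarrow> bool" where
  "cless n i (Some F) (Some G) = (F \<subset> G)"
| "cless n i (Some F) None = (F \<in> Bfaces n i)"
| "cless n i None _ = False"

text \<open>f_T of the face poset of \<Lambda>^n_i with \<hat>0, \<hat>1 adjoined: number of chains
  \<hat>0 < x_1 < ... < \<hat>1 whose rank set is T (T \<subseteq> [n]).\<close>
definition flagf :: "nat \<Rightarrow> nat \<Rightarrow> nat set \<Rightarrow> nat" where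
  "flagf n i T = card {xs. set xs \<subseteq> cells n i \<and> sorted_wrt (cless n i) xs \<and>
                          map (crank n) xs = sorted_list_of_set T}"

definition flagh :: "nat \<Rightarrow> nat \<Rightarrow> nat set \<Rightarrow> int" where
  "flagh n i S = (\<Sum>T\<in>Pow S. (-1) ^ card (S - T) * int (flagf n i T))"

text \<open>cd-index \<Phi>_{\<Lambda>^n_i}: the degree-n cd-polynomial with
  \<Phi>(a+b,ab+ba) = \<Sum>_S h_S u_S.\<close>
definition cdindex :: "nat \<Rightarrow> nat \<Rightarrow> cdpoly" where
  "cdindex n i = (THE \<Phi>. (\<forall>w. cdeg w \<noteq> n \<longrightarrow> \<Phi> w = 0) \<and>
       (\<forall>S. S \<subseteq> {1..n} \<longrightarrow> abcoef \<Phi> (uword n S) = flagh n i S))"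

definition checkPhi :: "nat \<Rightarrow> nat \<Rightarrow> cdpoly" where
  "checkPhi n i = (if i = 0 then cdindex n 0
                   else (\<lambda>w. cdindex n i w - cdindex n (i - 1) w))"

fun gaps_from :: "nat \<Rightarrow> nat list \<Rightarrow> nat list" where
  "gaps_from p [] = []"
| "gaps_from p (x # xs) = (x - p) # gaps_from x xs"

definition multinom :: "nat set \<Rightarrow> nat" where
  "multinom S = fact (Max S) div prod_list (map fact (gaps_from 0 (sorted_list_of_set S)))"

end

theory Submission
  imports Defs
begin

lemma length_le_cdeg: "length w \<le> cdeg w"
  by (induction w rule: cdeg.induct) auto

lemma cdwords_eq: "cdwords m = {w. cdeg w = m}"
  unfolding cdwords_def using length_le_cdeg by auto

lemma finite_cdwords: "finite (cdwords m)"
proof -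
  have "cdwords m \<subseteq> {w. set w \<subseteq> {C, D} \<and> length w \<le> m}"
    unfolding cdwords_def by (auto intro: cdl.exhaust)
  moreover have "finite {w. set w \<subseteq> {C, D} \<and> length w \<le> m}"
    by (rule finite_lists_length_le) simp
  ultimately show ?thesis by (rule finite_subset)
qed

lemma cdeg_append: "cdeg (v @ w) = cdeg v + cdeg w"
  by (induction v rule: cdeg.induct) auto

lemma cdeg_eq0: "cdeg w = 0 \<longleftrightarrow> w = []"
  by (cases w rule: cdeg.cases) auto

lemma cdeg_eq1: "cdeg w = Suc 0 \<longleftrightarrow> w = [C]"
  by (cases w rule: cdeg.cases) (auto simp: cdeg_eq0)

lemma cdwords_0: "cdwords 0 = {[]}"
  by (auto simp: cdwords_eq cdeg_eq0)

lemma cdwords_1: "cdwords (Suc 0) = {[C]}"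
  by (auto simp: cdwords_eq cdeg_eq1)

lemma cdwords_SS_front:
  "cdwords (Suc (Suc N)) = (\<lambda>w. C # w) ` cdwords (Suc N) \<union> (\<lambda>w. D # w) ` cdwords N"
proof -
  have "w \<in> (\<lambda>w. C # w) ` cdwords (Suc N) \<union> (\<lambda>w. D # w) ` cdwords N"
    if "cdeg w = Suc (Suc N)" for w
    using that by (cases w rule: cdeg.cases) (auto simp: cdwords_eq)
  then show ?thesis by (auto simp: cdwords_eq)
qed

lemma cdwords_SS_back:
  "cdwords (Suc (Suc N)) = (\<lambda>w. w @ [C]) ` cdwords (Suc N) \<union> (\<lambda>w. w @ [D]) ` cdwords N"
proof -
  have "w \<in> (\<lambda>w. w @ [C]) ` cdwords (Suc N) \<union> (\<lambda>w. w @ [D]) ` cdwords N"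
    if "cdeg w = Suc (Suc N)" for w
  proof -
    have "w \<noteq> []" using that by auto
    then have w: "w = butlast w @ [last w]" by simp
    show ?thesis
    proof (cases "last w")
      case C
      then have "cdeg (butlast w) = Suc N" using that w by (metis cdeg_append cdeg.simps add_Suc_right add_0_right Suc_inject)
      then show ?thesis using w C by (auto simp: cdwords_eq intro!: image_eqI[of _ _ "butlast w"])
    next
      case D
      then have "cdeg (butlast w) = N" using that w by (metis cdeg_append cdeg.simps add_Suc_right add_0_right Suc_inject)
      then show ?thesis using w D by (auto simp: cdwords_eq intro!: image_eqI[of _ _ "butlast w"])
    qed
  qed
  then show ?thesis by (auto simp: cdwords_eq cdeg_append)
qed

lemma sum_cdwords_SS_front:
  "(\<Sum>w\<in>cdwords (Suc (Suc N)). h w) = (\<Sum>w\<in>cdwords (Suc N). h (C # w)) + (\<Sum>w\<in>cdwords N. h (D # w))"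
  unfolding cdwords_SS_front
  by (subst sum.union_disjoint) (auto simp: finite_cdwords sum.reindex)

lemma sum_cdwords_SS_back:
  "(\<Sum>w\<in>cdwords (Suc (Suc N)). h w) = (\<Sum>w\<in>cdwords (Suc N). h (w @ [C])) + (\<Sum>w\<in>cdwords N. h (w @ [D]))"
  unfolding cdwords_SS_back
  by (subst sum.union_disjoint) (auto simp: finite_cdwords sum.reindex inj_on_def)

fun fw :: "cdl list \<Rightarrow> bool list \<Rightarrow> nat" where
  "fw [] [] = 1"
| "fw (C # w) (x # u) = (if x then 2 else 1) * fw w u"
| "fw (D # w) (x # y # u) = (if x \<and> y then 2 else if x \<or> y then 1 else 0) * fw w u"
| "fw _ _ = 0"

lemma fw_Nil: "fw [] s = (if s = [] then 1 else 0)"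
  by (cases s) auto

lemma fw_deg: "fw w s \<noteq> 0 \<Longrightarrow> cdeg w = length s"
  by (induction w s rule: fw.induct) auto

lemma fw_Nil2: "fw v [] = (if v = [] then 1 else 0)"
  using fw_deg[of v "[]"] cdeg_eq0[of v] by (cases "v = []") auto

lemma fw_app_C: "fw (w @ [C]) (s @ [x]) = fw w s * (if x then 2 else 1)"
proof (induction w arbitrary: s)
  case Nil
  then show ?case by (cases s) (auto simp: fw_Nil)
next
  case (Cons a w)
  show ?case
  proof (cases a)
    case C
    then show ?thesis using Cons by (cases s) (auto simp: fw_Nil2)
  next
    case D
    show ?thesis
    proof (cases s)
      case Nil
      then show ?thesis using D fw_deg[of "w @ [C]" "[]"] by (auto simp: cdeg_append)
    next
      case (Cons b s')
      then show ?thesis using D Cons.IH by (cases s') (auto simp: fw_Nil2)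
    qed
  qed
qed

lemma fw_app_D: "fw (w @ [D]) (s @ [x, y]) = fw w s * (if x \<and> y then 2 else if x \<or> y then 1 else 0)"
proof (induction w arbitrary: s)
  case Nil
  then show ?case
  proof (cases s)
    case (Cons a s')
    then show ?thesis by (cases s') (simp_all add: fw_Nil)
  qed simp
next
  case (Cons a w)
  note IH = Cons.IH
  show ?case
  proof (cases a)
    case C
    show ?thesis
    proof (cases s)
      case Nil
      then show ?thesis using C fw_deg[of "w @ [D]" "[y]"] by (auto simp: cdeg_append)
    next
      case (Cons b s')
      then show ?thesis using C IH by simp
    qed
  next
    case D
    show ?thesis
    proof (cases s)
      case Nil
      then show ?thesis using D fw_Nil2[of "w @ [D]"] by simp
    next
      case (Cons b s')
      show ?thesis
      proof (cases s')
        case Nil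
        then show ?thesis using D Cons fw_deg[of "w @ [D]" "[y]"] by (auto simp: cdeg_append)
      next
        case (Cons c s'')
        then show ?thesis using D \<open>s = b # s'\<close> IH by simp
      qed
    qed
  qed
qed

fun subl :: "bool list \<Rightarrow> bool list set" where
  "subl [] = {[]}"
| "subl (x # s) = (\<lambda>u. False # u) ` subl s \<union> (if x then (\<lambda>u. True # u) ` subl s else {})"

lemma finite_subl: "finite (subl s)"
  by (induction s) auto

lemma subl_length: "u \<in> subl s \<Longrightarrow> length u = length s"
  by (induction s arbitrary: u) (auto split: if_splits)

lemma sum_subl_Cons:
  "(\<Sum>u\<in>subl (x # s). h u) = (\<Sum>u\<in>subl s. h (False # u)) + (if x then (\<Sum>u\<in>subl s. h (True # u)) else 0)"
proof (cases x)
  case True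
  have "(\<Sum>u\<in>subl (x # s). h u) = (\<Sum>u\<in>(\<lambda>u. False # u) ` subl s. h u) + (\<Sum>u\<in>(\<lambda>u. True # u) ` subl s. h u)"
    using True by (simp add: sum.union_disjoint finite_subl, subst sum.union_disjoint) (auto simp: finite_subl)
  then show ?thesis using True by (simp add: sum.reindex)
qed (simp add: sum.reindex)

lemma sum_subl_expcount: "(\<Sum>u\<in>subl s. expcount w u) = fw w s"
proof (induction w arbitrary: s)
  case Nil
  show ?case
  proof (cases s)
    case Nil then show ?thesis by simp
  next
    case (Cons x s')
    have "expcount [] u = 0" if "u \<in> subl s" for u
      using that subl_length[OF that] Cons by (cases u) auto
    then show ?thesis using Cons by simp
  qed
next
  case (Cons a w)
  show ?case
  proof (cases a)
    case C
    show ?thesis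
    proof (cases s)
      case Nil then show ?thesis using C by simp
    next
      case (Cons x s')
      then show ?thesis using C Cons.IH by (simp add: sum_subl_Cons del: subl.simps(2))
    qed
  next
    case D
    show ?thesis
    proof (cases s)
      case Nil then show ?thesis using D by simp
    next
      case (Cons x s')
      show ?thesis
      proof (cases s')
        case Nil
        then show ?thesis using D \<open>s = x # s'\<close> by (simp add: sum_subl_Cons del: subl.simps(2))
      next
        case (Cons y s'')
        then show ?thesis using D \<open>s = x # s'\<close> Cons.IH by (simp add: sum_subl_Cons del: subl.simps(2))
      qed
    qed
  qed
qed

lemma subl_iff: "u \<in> subl s \<longleftrightarrow> length u = length s \<and> (\<forall>i<length s. u ! i \<longrightarrow> s ! i)"
proof (induction s arbitrary: u)
  case Nil then show ?case by auto
next
  case (Cons x s)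
  show ?case
  proof (cases u)
    case Nil then show ?thesis by auto
  next
    case (Cons b u')
    have 1: "(\<forall>i<length (x # s). u ! i \<longrightarrow> (x # s) ! i) \<longleftrightarrow> (b \<longrightarrow> x) \<and> (\<forall>i<length s. u' ! i \<longrightarrow> s ! i)"
      unfolding Cons length_Cons All_less_Suc2 by simp
    have 2: "b # u' \<in> subl (x # s) \<longleftrightarrow> (b \<longrightarrow> x) \<and> u' \<in> subl s"
      by (cases b) auto
    show ?thesis unfolding Cons 2 using 1 Cons.IH[of u'] Cons by auto
  qed
qed

lemma length_uword[simp]: "length (uword n S) = n"
  by (simp add: uword_def)

lemma nth_uword: "i < n \<Longrightarrow> uword n S ! i = (Suc i \<in> S)"
  by (simp add: uword_def)

lemma uword_Suc: "uword (Suc n) S = uword n S @ [Suc n \<in> S]"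
  by (simp add: uword_def)

lemma uword_cong: "(\<And>i. 1 \<le> i \<Longrightarrow> i \<le> n \<Longrightarrow> i \<in> S \<longleftrightarrow> i \<in> T) \<Longrightarrow> uword n S = uword n T"
  by (simp add: uword_def)

lemma uword_inj: "S \<subseteq> {1..n} \<Longrightarrow> T \<subseteq> {1..n} \<Longrightarrow> uword n S = uword n T \<Longrightarrow> S = T"
proof -
  assume a: "S \<subseteq> {1..n}" "T \<subseteq> {1..n}" "uword n S = uword n T"
  have "x \<in> S \<longleftrightarrow> x \<in> T" if x: "1 \<le> x" "x \<le> n" for x
  proof -
    obtain i where i: "x = Suc i" "i < n" using x by (cases x) auto
    show ?thesis using a(3) nth_uword[OF i(2), of S] nth_uword[OF i(2), of T] i by simp
  qed
  then show ?thesis using a(1,2) by auto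
qed

lemma uword_surj: "length u = n \<Longrightarrow> \<exists>S\<subseteq>{1..n}. u = uword n S"
proof -
  assume l: "length u = n"
  let ?S = "Suc ` {i. i < n \<and> u ! i}"
  have "u = uword n ?S" using l by (auto simp: list_eq_iff_nth_eq nth_uword)
  moreover have "?S \<subseteq> {1..n}" by auto
  ultimately show ?thesis by blast
qed

lemma uword_image_Pow: "S \<subseteq> {1..n} \<Longrightarrow> uword n ` Pow S = subl (uword n S)"
proof
  assume S: "S \<subseteq> {1..n}"
  show "uword n ` Pow S \<subseteq> subl (uword n S)"
  proof
    fix x assume "x \<in> uword n ` Pow S"
    then obtain T where T: "T \<subseteq> S" "x = uword n T" by blast
    have "\<forall>i<n. uword n T ! i \<longrightarrow> uword n S ! i"
    proof (intro allI impI)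
      fix i assume "i < n" "uword n T ! i"
      then show "uword n S ! i" using T(1) by (simp add: nth_uword subset_iff)
    qed
    then show "x \<in> subl (uword n S)" unfolding subl_iff T(2) by simp
  qed
  show "subl (uword n S) \<subseteq> uword n ` Pow S"
  proof
    fix u assume u: "u \<in> subl (uword n S)"
    let ?T = "{j. j \<in> S \<and> u ! (j - 1)}"
    have lu: "length u = n" and uS: "\<forall>i<n. u ! i \<longrightarrow> uword n S ! i"
      using u unfolding subl_iff by simp_all
    have "uword n ?T ! i = u ! i" if "i < n" for i
    proof -
      have "uword n ?T ! i = (Suc i \<in> S \<and> u ! i)" using that by (simp add: nth_uword)
      also have "\<dots> = u ! i" using uS that by (auto simp: nth_uword)
      finally show ?thesis .
    qed
    then have eq: "uword n ?T = u" using lu by (simp add: list_eq_iff_nth_eq)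
    have Tin: "?T \<in> Pow S" by auto
    show "u \<in> uword n ` Pow S" by (rule rev_image_eqI[where f="uword n", OF Tin eq[symmetric]])
  qed
qed

lemma sum_Pow_expcount:
  assumes "S \<subseteq> {1..n}"
  shows "(\<Sum>T\<in>Pow S. expcount w (uword n T)) = fw w (uword n S)"
proof -
  have inj: "inj_on (uword n) (Pow S)"
  proof (rule inj_onI)
    fix T1 T2 assume "T1 \<in> Pow S" "T2 \<in> Pow S" "uword n T1 = uword n T2"
    then show "T1 = T2" using assms uword_inj[of T1 n T2] by auto
  qed
  have "(\<Sum>T\<in>Pow S. expcount w (uword n T)) = (\<Sum>u\<in>uword n ` Pow S. expcount w u)"
    by (simp add: sum.reindex[OF inj])
  also have "\<dots> = fw w (uword n S)"
    using assms by (simp add: uword_image_Pow sum_subl_expcount)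
  finally show ?thesis .
qed

lemma fvec_fw:
  assumes "S \<subseteq> {1..n}"
  shows "fvec n \<Phi> S = (\<Sum>w\<in>cdwords n. \<Phi> w * int (fw w (uword n S)))"
proof -
  have "fvec n \<Phi> S = (\<Sum>T\<in>Pow S. \<Sum>w\<in>cdwords n. \<Phi> w * int (expcount w (uword n T)))"
    by (simp add: fvec_def abcoef_def)
  also have "\<dots> = (\<Sum>w\<in>cdwords n. \<Sum>T\<in>Pow S. \<Phi> w * int (expcount w (uword n T)))"
    by (rule sum.swap)
  also have "\<dots> = (\<Sum>w\<in>cdwords n. \<Phi> w * int (fw w (uword n S)))"
    by (simp add: sum_distrib_left[symmetric] sum_Pow_expcount[OF assms] flip: of_nat_sum)
  finally show ?thesis .
qed

lemma abcoef_Nil: "abcoef \<Phi> [] = \<Phi> []"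
  by (simp add: abcoef_def cdwords_0)

lemma abcoef_single: "abcoef \<Phi> [x] = \<Phi> [C]"
  by (simp add: abcoef_def cdwords_1)

lemma abcoef_SS: "abcoef \<Phi> (x # y # u) = abcoef (\<lambda>w. \<Phi> (C # w)) (y # u) + (if x \<noteq> y then abcoef (\<lambda>w. \<Phi> (D # w)) u else 0)"
  unfolding abcoef_def by (simp add: sum_cdwords_SS_front)

lemma abcoef_diff: "abcoef (\<lambda>w. f w - g w) u = abcoef f u - abcoef g u"
  unfolding abcoef_def by (simp add: left_diff_distrib sum_subtractf)

lemma uniq_aux: "(\<forall>u. length u = N \<longrightarrow> abcoef \<Phi> u = 0) \<Longrightarrow> cdeg w = N \<Longrightarrow> \<Phi> w = 0"
proof (induction N arbitrary: \<Phi> w rule: less_induct)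
  case (less N)
  show ?case
  proof (cases N)
    case 0
    then show ?thesis using less.prems abcoef_Nil[of \<Phi>] cdeg_eq0[of w] by auto
  next
    case (Suc M)
    show ?thesis
    proof (cases M)
      case 0
      then show ?thesis using Suc less.prems abcoef_single[of \<Phi> True] cdeg_eq1[of w] by auto
    next
      case (Suc K)
      have NK: "N = Suc (Suc K)" using Suc \<open>N = Suc M\<close> by simp
      let ?P1 = "\<lambda>w. \<Phi> (C # w)" and ?P2 = "\<lambda>w. \<Phi> (D # w)"
      have 2: "abcoef ?P2 u = 0" if "length u = K" for u
      proof -
        have "abcoef \<Phi> (True # False # u) = 0" "abcoef \<Phi> (False # False # u) = 0"
          using less.prems(1) that NK by auto
        then show ?thesis by (simp add: abcoef_SS)
      qed
      have P2: "?P2 v = 0" if "cdeg v = K" for v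
        using less.IH[of K ?P2 v] 2 that NK by auto
      have 1: "abcoef ?P1 u = 0" if lu: "length u = Suc K" for u
      proof -
        obtain y u' where u: "u = y # u'" using lu by (cases u) auto
        have "abcoef \<Phi> (y # y # u') = 0" using less.prems(1) lu NK u by auto
        then show ?thesis using u by (simp add: abcoef_SS)
      qed
      have P1: "?P1 v = 0" if "cdeg v = Suc K" for v
        using less.IH[of "Suc K" ?P1 v] 1 that NK by auto
      show ?thesis
        using less.prems(2) NK P1 P2 by (cases w rule: cdeg.cases) auto
    qed
  qed
qed

lemma sum_Pow_insert:
  assumes "finite A" "x \<notin> A"
  shows "(\<Sum>U\<in>Pow (insert x A). f U) = (\<Sum>U\<in>Pow A. f U) + (\<Sum>U\<in>Pow A. f (insert x U))"
proof -
  have inj: "inj_on (insert x) (Pow A)"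
    using assms(2) by (auto intro!: inj_onI simp: insert_eq_iff)
  have "(\<Sum>U\<in>Pow (insert x A). f U) = (\<Sum>U\<in>Pow A. f U) + (\<Sum>U\<in>insert x ` Pow A. f U)"
    unfolding Pow_insert using assms by (intro sum.union_disjoint) auto
  also have "(\<Sum>U\<in>insert x ` Pow A. f U) = (\<Sum>U\<in>Pow A. f (insert x U))"
    by (simp add: sum.reindex[OF inj])
  finally show ?thesis .
qed

lemma moebius:
  "finite S \<Longrightarrow> (\<Sum>T\<in>Pow S. (-1) ^ card (S - T) * (\<Sum>U\<in>Pow T. a U)) = (a S :: int)"
proof (induction S arbitrary: a rule: finite_induct)
  case empty
  then show ?case by simp
next
  case (insert x F)
  have fin: "finite T" if "T \<in> Pow F" for T using that insert(1) finite_subset by auto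
  have c1: "card (insert x F - T) = Suc (card (F - T))" if "T \<in> Pow F" for T
  proof -
    have "insert x F - T = insert x (F - T)" using that insert(2) by auto
    then show ?thesis using insert(1,2) by simp
  qed
  have c2: "insert x F - insert x T = F - T" for T using insert(2) by auto
  have "(\<Sum>T\<in>Pow (insert x F). (-1) ^ card (insert x F - T) * (\<Sum>U\<in>Pow T. a U))
      = (\<Sum>T\<in>Pow F. (-1) ^ card (insert x F - T) * (\<Sum>U\<in>Pow T. a U))
        + (\<Sum>T\<in>Pow F. (-1) ^ card (F - T) * (\<Sum>U\<in>Pow (insert x T). a U))"
    by (subst sum_Pow_insert[OF insert(1,2)]) (simp add: c2)
  also have "\<dots> = (\<Sum>T\<in>Pow F. (-1) ^ card (F - T) * (\<Sum>U\<in>Pow T. a (insert x U)))"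
  proof -
    have h: "(-1) ^ card (insert x F - T) * (\<Sum>U\<in>Pow T. a U) + (-1) ^ card (F - T) * (\<Sum>U\<in>Pow (insert x T). a U)
        = (-1) ^ card (F - T) * (\<Sum>U\<in>Pow T. a (insert x U))"
      if T: "T \<in> Pow F" for T
    proof -
      have xT: "x \<notin> T" using T insert(2) by auto
      have "(\<Sum>U\<in>Pow (insert x T). a U) = (\<Sum>U\<in>Pow T. a U) + (\<Sum>U\<in>Pow T. a (insert x U))"
        by (rule sum_Pow_insert[OF fin[OF T] xT])
      then show ?thesis by (simp add: c1[OF T] algebra_simps)
    qed
    show ?thesis
      by (subst sum.distrib[symmetric]) (rule sum.cong, simp_all add: h)
  qed
  also have "\<dots> = a (insert x F)"
    using insert.IH[of "\<lambda>U. a (insert x U)"] by simp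
  finally show ?case .
qed

lemma moebius_inv:
  assumes "finite S" "\<And>T. T \<subseteq> S \<Longrightarrow> f T = (\<Sum>U\<in>Pow T. a U)"
  shows "a S = (\<Sum>T\<in>Pow S. (-1) ^ card (S - T) * (f T :: int))"
  using moebius[OF assms(1), of a] assms(2) by simp

lemma cdindex_eq:
  assumes "\<forall>w. cdeg w \<noteq> n \<longrightarrow> \<Phi>0 w = 0"
    and "\<forall>S. S \<subseteq> {1..n} \<longrightarrow> abcoef \<Phi>0 (uword n S) = flagh n i S"
  shows "cdindex n i = \<Phi>0"
  unfolding cdindex_def
proof (rule the_equality)
  show "(\<forall>w. cdeg w \<noteq> n \<longrightarrow> \<Phi>0 w = 0) \<and> (\<forall>S. S \<subseteq> {1..n} \<longrightarrow> abcoef \<Phi>0 (uword n S) = flagh n i S)"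
    using assms by blast
next
  fix \<Phi>
  assume P: "(\<forall>w. cdeg w \<noteq> n \<longrightarrow> \<Phi> w = 0) \<and> (\<forall>S. S \<subseteq> {1..n} \<longrightarrow> abcoef \<Phi> (uword n S) = flagh n i S)"
  show "\<Phi> = \<Phi>0"
  proof
    fix w
    show "\<Phi> w = \<Phi>0 w"
    proof (cases "cdeg w = n")
      case False then show ?thesis using P assms by auto
    next
      case True
      have "\<forall>u. length u = n \<longrightarrow> abcoef (\<lambda>w. \<Phi> w - \<Phi>0 w) u = 0"
      proof (intro allI impI)
        fix u :: "bool list" assume "length u = n"
        then obtain S where "S \<subseteq> {1..n}" "u = uword n S" using uword_surj by blast
        then show "abcoef (\<lambda>w. \<Phi> w - \<Phi>0 w) u = 0" using P assms by (simp add: abcoef_diff)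
      qed
      from uniq_aux[OF this True] show ?thesis by simp
    qed
  qed
qed

fun mb :: "nat \<Rightarrow> nat list \<Rightarrow> nat" where
  "mb p [] = 1"
| "mb p (x # xs) = (x choose p) * mb x xs"

definition Mset :: "nat set \<Rightarrow> nat" where
  "Mset S = mb 0 (sorted_list_of_set S)"

definition max0 :: "nat set \<Rightarrow> nat" where
  "max0 S = last (0 # sorted_list_of_set S)"

lemma mb_append: "mb p (xs @ [y]) = mb p xs * (y choose last (p # xs))"
  by (induction xs arbitrary: p) auto

lemma sls_insert_top:
  assumes "finite S" "\<forall>y\<in>S. y < x"
  shows "sorted_list_of_set (insert x S) = sorted_list_of_set S @ [x]"
proof (rule sorted_distinct_set_unique)
  show "sorted (sorted_list_of_set S @ [x])"
    using assms by (auto simp: sorted_append less_imp_le)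
  show "distinct (sorted_list_of_set S @ [x])"
    using assms by auto
qed (use assms in \<open>auto simp del: sorted_list_of_set_insert_remove\<close>)

lemma Mset_empty[simp]: "Mset {} = 1" by (simp add: Mset_def)
lemma max0_empty[simp]: "max0 {} = 0" by (simp add: max0_def)

lemma Mset_insert_top:
  "finite S \<Longrightarrow> \<forall>y\<in>S. y < x \<Longrightarrow> Mset (insert x S) = Mset S * (x choose max0 S)"
  by (simp add: Mset_def max0_def sls_insert_top mb_append del: sorted_list_of_set_insert_remove)

lemma max0_insert_top:
  "finite S \<Longrightarrow> \<forall>y\<in>S. y < x \<Longrightarrow> max0 (insert x S) = x"
  by (simp add: max0_def sls_insert_top del: sorted_list_of_set_insert_remove)

definition NS :: "nat \<Rightarrow> (nat \<Rightarrow> int) \<Rightarrow> (nat \<Rightarrow> int) \<Rightarrow> nat set \<Rightarrow> int" where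
  "NS N g k S = (if N \<in> S then int (Mset (S - {N})) * k (max0 (S - {N})) else int (Mset S) * g (max0 S))"

definition EE :: "nat \<Rightarrow> (nat \<Rightarrow> int) \<Rightarrow> (nat \<Rightarrow> int) \<Rightarrow> bool" where
  "EE N g k \<longleftrightarrow> (\<forall>m<N. (\<Sum>j<N. (-1) ^ j * int (j choose m) * g j) = (-1) ^ N * (g m - k m)) \<and>
                 (\<forall>m<N. (\<Sum>j<N. (-1) ^ j * int (j choose m) * k j) = - ((-1) ^ N * k m))"

fun phi :: "nat \<Rightarrow> (nat \<Rightarrow> int) \<Rightarrow> (nat \<Rightarrow> int) \<Rightarrow> cdl list \<Rightarrow> int" where
  "phi 0 g k w = (if w = [] then g 0 else 0)"
| "phi (Suc 0) g k w = (if w = [C] then g 0 else 0)"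
| "phi (Suc (Suc M)) g k w = (if w = [] then 0
      else if last w = C then phi (Suc M) g (\<lambda>m. int (Suc M choose m) * g (Suc M) - k m + 2 * g m) (butlast w)
      else phi M (\<lambda>m. k m - 2 * g m) (\<lambda>m. int (M choose m) * (k M - 2 * g M)) (butlast w))"

lemma phi_supp: "phi N g k w \<noteq> 0 \<Longrightarrow> cdeg w = N"
proof (induction N g k w rule: phi.induct)
  case (3 M g k w)
  then have w: "w \<noteq> []" by (auto split: if_splits)
  then have ww: "w = butlast w @ [last w]" by simp
  show ?case
  proof (cases "last w")
    case C
    then have "cdeg (butlast w) = Suc M" using 3 w by (auto split: if_splits)
    then show ?thesis using ww C by (metis cdeg_append cdeg.simps(1,2) add_Suc_right add_0_right)
  next
    case D
    then have "cdeg (butlast w) = M" using 3 w by (auto split: if_splits)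
    then show ?thesis using ww D by (metis cdeg_append cdeg.simps(1,3) add_Suc_right add_0_right)
  qed
qed (auto split: if_splits)

lemma sum_top: "(\<Sum>j<Suc K. (-1) ^ j * int (j choose K) * f j) = (-1) ^ K * (f K :: int)"
proof -
  have "(\<Sum>j<K. (-1) ^ j * int (j choose K) * f j) = 0"
    by (rule sum.neutral) auto
  then show ?thesis by simp
qed

lemma EE_top: "EE (Suc K) g k \<Longrightarrow> k K = 2 * g K"
proof -
  assume "EE (Suc K) g k"
  then have "(\<Sum>j<Suc K. (-1) ^ j * int (j choose K) * g j) = (-1) ^ Suc K * (g K - k K)"
    unfolding EE_def by blast
  then have "(-1) ^ K * g K = - ((-1) ^ K * (g K - k K))" by (simp only: sum_top power_Suc)
  then have "(-1) ^ K * (k K - 2 * g K) = (0::int)" by (simp add: algebra_simps)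
  then show ?thesis by simp
qed

lemma alt_vand:
  "(\<Sum>l\<le>A. (-1) ^ l * int (A choose l) * int ((c + l) choose m))
     = (-1) ^ A * (if A \<le> m then int (c choose (m - A)) else 0)"
proof (induction A arbitrary: c)
  case 0
  then show ?case by simp
next
  case (Suc A)
  let ?f = "\<lambda>c l. (-1) ^ l * int (A choose l) * int ((c + l) choose m)"
  have e1: "(\<Sum>l\<le>Suc A. (-1) ^ l * int (Suc A choose l) * int ((c + l) choose m))
      = int (c choose m) + (\<Sum>l\<le>A. (-1) ^ Suc l * int (A choose Suc l) * int ((c + Suc l) choose m))
        + (\<Sum>l\<le>A. (-1) ^ Suc l * int (A choose l) * int ((c + Suc l) choose m))"
    by (subst sum.atMost_Suc_shift) (simp add: sum.distrib ring_distribs del: power_Suc sum.atMost_Suc)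
  have e2: "(\<Sum>l\<le>Suc A. ?f c l) = int (c choose m) + (\<Sum>l\<le>A. (-1) ^ Suc l * int (A choose Suc l) * int ((c + Suc l) choose m))"
    by (subst sum.atMost_Suc_shift) (simp del: power_Suc sum.atMost_Suc)
  have e3: "(\<Sum>l\<le>Suc A. ?f c l) = (\<Sum>l\<le>A. ?f c l)"
    by simp
  have e4: "(\<Sum>l\<le>A. (-1) ^ Suc l * int (A choose l) * int ((c + Suc l) choose m)) = - (\<Sum>l\<le>A. ?f (Suc c) l)"
    by (simp add: sum_negf[symmetric])
  have "(\<Sum>l\<le>Suc A. (-1) ^ l * int (Suc A choose l) * int ((c + l) choose m))
      = (\<Sum>l\<le>A. ?f c l) - (\<Sum>l\<le>A. ?f (Suc c) l)"
    using e1 e2 e3 e4 by simp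
  also have "\<dots> = (-1) ^ A * (if A \<le> m then int (c choose (m - A)) else 0)
                 - (-1) ^ A * (if A \<le> m then int (Suc c choose (m - A)) else 0)"
    using Suc.IH[of c] Suc.IH[of "Suc c"] by simp
  also have "\<dots> = (-1) ^ Suc A * (if Suc A \<le> m then int (c choose (m - Suc A)) else 0)"
  proof (cases "Suc A \<le> m")
    case True
    then have "m - A = Suc (m - Suc A)" by simp
    then show ?thesis using True by (simp add: algebra_simps)
  next
    case False
    then show ?thesis by (cases "A = m") auto
  qed
  finally show ?case .
qed

definition cb :: "nat \<Rightarrow> nat \<Rightarrow> nat \<Rightarrow> int" where
  "cb A B j = (if B \<le> j then int (A choose (j - B)) else 0)"

lemma cb_0[simp]: "cb A 0 j = int (A choose j)"
  by (simp add: cb_def)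

lemma alt_cb:
  assumes "A + B < N"
  shows "(\<Sum>j<N. (-1) ^ j * int (j choose m) * cb A B j) = (-1) ^ (A + B) * cb B A m"
proof -
  have "(\<Sum>j<N. (-1) ^ j * int (j choose m) * cb A B j) = (\<Sum>j\<in>{B..B+A}. (-1) ^ j * int (j choose m) * cb A B j)"
    using assms by (intro sum.mono_neutral_right) (auto simp: cb_def)
  also have "{B..B+A} = (\<lambda>l. B + l) ` {..A}"
  proof
    show "{B..B+A} \<subseteq> (\<lambda>l. B + l) ` {..A}"
    proof
      fix x assume "x \<in> {B..B+A}"
      then show "x \<in> (\<lambda>l. B + l) ` {..A}" by (intro image_eqI[of _ _ "x - B"]) auto
    qed
  qed auto
  also have "(\<Sum>j\<in>(\<lambda>l. B + l) ` {..A}. (-1) ^ j * int (j choose m) * cb A B j)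
      = (\<Sum>l\<le>A. (-1) ^ (B + l) * int ((B + l) choose m) * cb A B (B + l))"
    by (subst sum.reindex) (auto simp: inj_on_def)
  also have "\<dots> = (-1) ^ B * (\<Sum>l\<le>A. (-1) ^ l * int (A choose l) * int ((B + l) choose m))"
    by (simp add: cb_def sum_distrib_left power_add algebra_simps)
  also have "\<dots> = (-1) ^ (A + B) * cb B A m"
    by (simp add: alt_vand cb_def power_add)
  finally show ?thesis .
qed

lemma binom_partial:
  assumes "m < A"
  shows "(\<Sum>j<A. (-1) ^ j * int (j choose m) * int (A choose j)) = - ((-1) ^ A * int (A choose m))"
proof -
  have "(\<Sum>j<Suc A. (-1) ^ j * int (j choose m) * cb A 0 j) = (-1) ^ A * cb 0 A m"
    using alt_cb[of A 0 "Suc A" m] by simp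
  then show ?thesis using assms by (simp add: cb_def)
qed

lemma EE_1:
  assumes E: "EE (Suc (Suc M)) g k"
  shows "EE (Suc M) g (\<lambda>m. int (Suc M choose m) * g (Suc M) - k m + 2 * g m)"
  unfolding EE_def
proof (intro conjI allI impI)
  fix m assume m: "m < Suc M"
  let ?K = "Suc M"
  define s :: int where "s = (-1) ^ ?K"
  define SG where "SG = (\<Sum>j<?K. (-1) ^ j * int (j choose m) * g j)"
  define SK where "SK = (\<Sum>j<?K. (-1) ^ j * int (j choose m) * k j)"
  define SB where "SB = (\<Sum>j<?K. (-1) ^ j * int (j choose m) * int (?K choose j))"
  have mm: "m < Suc (Suc M)" using m by simp
  have hg0: "(\<Sum>j<Suc (Suc M). (-1) ^ j * int (j choose m) * g j) = (-1) ^ Suc (Suc M) * (g m - k m)"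
    using E mm unfolding EE_def by blast
  have hk0: "(\<Sum>j<Suc (Suc M). (-1) ^ j * int (j choose m) * k j) = - ((-1) ^ Suc (Suc M) * k m)"
    using E mm unfolding EE_def by blast
  have hg: "SG + s * int (?K choose m) * g ?K = - s * (g m - k m)"
    using hg0 unfolding SG_def s_def by (simp add: algebra_simps)
  have hk: "SK + s * int (?K choose m) * k ?K = s * k m"
    using hk0 unfolding SK_def s_def by (simp add: algebra_simps)
  have top: "k ?K = 2 * g ?K" using EE_top[OF E] .
  have bp: "SB = - (s * int (?K choose m))" unfolding SB_def s_def using binom_partial[OF m] .
  have s2: "(\<Sum>j<?K. (-1) ^ j * int (j choose m) * (int (?K choose j) * g ?K - k j + 2 * g j)) = g ?K * SB - SK + 2 * SG"
    unfolding SB_def SK_def SG_def by (simp add: sum_subtractf sum.distrib sum_distrib_left algebra_simps)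
  show "(\<Sum>j<?K. (-1) ^ j * int (j choose m) * g j) = (-1) ^ ?K * (g m - (int (?K choose m) * g ?K - k m + 2 * g m))"
    unfolding SG_def[symmetric] s_def[symmetric] using hg unfolding s_def[symmetric] by (simp add: algebra_simps)
  show "(\<Sum>j<?K. (-1) ^ j * int (j choose m) * (int (?K choose j) * g ?K - k j + 2 * g j)) = - ((-1) ^ ?K * (int (?K choose m) * g ?K - k m + 2 * g m))"
    unfolding s2 s_def[symmetric] using hg hk top bp unfolding s_def[symmetric] by (simp add: algebra_simps)
qed

lemma EE_2:
  assumes E: "EE (Suc (Suc M)) g k"
  shows "EE M (\<lambda>m. k m - 2 * g m) (\<lambda>m. int (M choose m) * (k M - 2 * g M))"
  unfolding EE_def
proof (intro conjI allI impI)
  fix m assume m: "m < M"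
  define s :: int where "s = (-1) ^ M"
  define SG where "SG = (\<Sum>j<M. (-1) ^ j * int (j choose m) * g j)"
  define SK where "SK = (\<Sum>j<M. (-1) ^ j * int (j choose m) * k j)"
  define SB where "SB = (\<Sum>j<M. (-1) ^ j * int (j choose m) * int (M choose j))"
  have mm: "m < Suc (Suc M)" using m by simp
  have hg0: "(\<Sum>j<Suc (Suc M). (-1) ^ j * int (j choose m) * g j) = (-1) ^ Suc (Suc M) * (g m - k m)"
    using E mm unfolding EE_def by blast
  have hk0: "(\<Sum>j<Suc (Suc M). (-1) ^ j * int (j choose m) * k j) = - ((-1) ^ Suc (Suc M) * k m)"
    using E mm unfolding EE_def by blast
  have hg: "SG + s * int (M choose m) * g M - s * int (Suc M choose m) * g (Suc M) = s * (g m - k m)"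
    using hg0 unfolding SG_def s_def by (simp add: algebra_simps)
  have hk: "SK + s * int (M choose m) * k M - s * int (Suc M choose m) * k (Suc M) = - (s * k m)"
    using hk0 unfolding SK_def s_def by (simp add: algebra_simps)
  have top: "k (Suc M) = 2 * g (Suc M)" using EE_top[OF E] .
  have bp: "SB = - (s * int (M choose m))" unfolding SB_def s_def using binom_partial[OF m] .
  have s1: "(\<Sum>j<M. (-1) ^ j * int (j choose m) * (k j - 2 * g j)) = SK - 2 * SG"
    unfolding SK_def SG_def by (simp add: sum_subtractf sum_distrib_left algebra_simps)
  have s2: "(\<Sum>j<M. (-1) ^ j * int (j choose m) * (int (M choose j) * (k M - 2 * g M))) = (k M - 2 * g M) * SB"
    unfolding SB_def by (simp add: sum_distrib_left algebra_simps)
  show "(\<Sum>j<M. (-1) ^ j * int (j choose m) * (k j - 2 * g j)) = (-1) ^ M * ((k m - 2 * g m) - int (M choose m) * (k M - 2 * g M))"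
    unfolding s1 s_def[symmetric] using hg hk top by (simp add: algebra_simps)
  show "(\<Sum>j<M. (-1) ^ j * int (j choose m) * (int (M choose j) * (k M - 2 * g M))) = - ((-1) ^ M * (int (M choose m) * (k M - 2 * g M)))"
    unfolding s2 s_def[symmetric] using bp by (simp add: algebra_simps)
qed

lemma finite_sub_interval: "S \<subseteq> {1..(N::nat)} \<Longrightarrow> finite S"
  using finite_subset by blast

lemma NS_simpl:
  assumes "S \<subseteq> {1..M}"
  shows "NS M G (\<lambda>m. int (M choose m) * G M) S = int (Mset S) * G (max0 S)"
proof (cases "M \<in> S")
  case True
  let ?S' = "S - {M}"
  have fin: "finite ?S'" using assms finite_sub_interval by blast
  have lt: "\<forall>y\<in>?S'. y < M" using assms by auto
  have S: "S = insert M ?S'" using True by auto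
  have "Mset S = Mset ?S' * (M choose max0 ?S')" "max0 S = M"
    using Mset_insert_top[OF fin lt] max0_insert_top[OF fin lt] S by simp_all
  then show ?thesis using True unfolding NS_def by simp
next
  case False
  then show ?thesis unfolding NS_def by simp
qed

lemma exist:
  "EE N g k \<Longrightarrow> S \<subseteq> {1..N} \<Longrightarrow> (\<Sum>w\<in>cdwords N. phi N g k w * int (fw w (uword N S))) = NS N g k S"
proof (induction N arbitrary: g k S rule: less_induct)
  case (less N)
  show ?case
  proof (cases N)
    case 0
    then have "S = {}" using less.prems by auto
    then show ?thesis using 0 by (simp add: cdwords_0 NS_def uword_def)
  next
    case (Suc M')
    show ?thesis
    proof (cases M')
      case 0
      have k0: "k 0 = 2 * g 0" using EE_top[of 0 g k] less.prems Suc 0 by simp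
      have S: "S \<subseteq> {1}" using less.prems Suc 0 by auto
      show ?thesis
      proof (cases "1 \<in> S")
        case True
        then have "S = {1}" using S by auto
        then show ?thesis using Suc 0 k0 by (simp add: cdwords_1 NS_def uword_def)
      next
        case False
        then have "S = {}" using S by auto
        then show ?thesis using Suc 0 by (simp add: cdwords_1 NS_def uword_def)
      qed
    next
      case (Suc M)
      have N: "N = Suc (Suc M)" using Suc \<open>N = Suc M'\<close> by simp
      define K1 where "K1 = (\<lambda>m. int (Suc M choose m) * g (Suc M) - k m + 2 * g m)"
      define G2 where "G2 = (\<lambda>m. k m - 2 * g m)"
      define K2 where "K2 = (\<lambda>m. int (M choose m) * (k M - 2 * g M))"
      have E: "EE (Suc (Suc M)) g k" using less.prems N by simp
      have E1: "EE (Suc M) g K1" unfolding K1_def by (rule EE_1[OF E])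
      have E2: "EE M G2 K2" unfolding K2_def G2_def using EE_2[OF E] by simp
      have top: "k (Suc M) = 2 * g (Suc M)" using EE_top[OF E] .
      define S1 where "S1 = S - {Suc (Suc M)}"
      define S0 where "S0 = S - {Suc M, Suc (Suc M)}"
      have S1sub: "S1 \<subseteq> {1..Suc M}" using less.prems N unfolding S1_def by auto
      have S0sub: "S0 \<subseteq> {1..M}" using less.prems N unfolding S0_def by auto
      define a where "a = (Suc M \<in> S)"
      define b where "b = (Suc (Suc M) \<in> S)"
      have u1: "uword (Suc (Suc M)) S = uword (Suc M) S1 @ [b]"
        unfolding uword_Suc[of "Suc M"] b_def S1_def by (simp add: uword_def)
      have u0: "uword (Suc (Suc M)) S = uword M S0 @ [a, b]"
        unfolding uword_Suc a_def b_def S0_def by (simp add: uword_def)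
      have IH1: "(\<Sum>w\<in>cdwords (Suc M). phi (Suc M) g K1 w * int (fw w (uword (Suc M) S1))) = NS (Suc M) g K1 S1"
        using less.IH[of "Suc M" g K1 S1] N E1 S1sub by simp
      have IH2: "(\<Sum>w\<in>cdwords M. phi M G2 K2 w * int (fw w (uword M S0))) = NS M G2 K2 S0"
        using less.IH[of M G2 K2 S0] N E2 S0sub by simp
      define cC :: int where "cC = (if b then 2 else 1)"
      define dD :: int where "dD = (if a \<and> b then 2 else if a \<or> b then 1 else 0)"
      have sC: "(\<Sum>w\<in>cdwords (Suc M). phi (Suc (Suc M)) g k (w @ [C]) * int (fw (w @ [C]) (uword (Suc (Suc M)) S)))
          = cC * NS (Suc M) g K1 S1"
      proof -
        have "(\<Sum>w\<in>cdwords (Suc M). phi (Suc (Suc M)) g k (w @ [C]) * int (fw (w @ [C]) (uword (Suc (Suc M)) S)))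
            = (\<Sum>w\<in>cdwords (Suc M). cC * (phi (Suc M) g K1 w * int (fw w (uword (Suc M) S1))))"
          unfolding u1 fw_app_C K1_def cC_def by (intro sum.cong) auto
        then show ?thesis by (simp add: IH1 sum_distrib_left[symmetric])
      qed
      have sD: "(\<Sum>w\<in>cdwords M. phi (Suc (Suc M)) g k (w @ [D]) * int (fw (w @ [D]) (uword (Suc (Suc M)) S)))
          = dD * NS M G2 K2 S0"
      proof -
        have "(\<Sum>w\<in>cdwords M. phi (Suc (Suc M)) g k (w @ [D]) * int (fw (w @ [D]) (uword (Suc (Suc M)) S)))
            = (\<Sum>w\<in>cdwords M. dD * (phi M G2 K2 w * int (fw w (uword M S0))))"
          unfolding u0 fw_app_D G2_def K2_def dD_def by (intro sum.cong) auto
        then show ?thesis by (simp add: IH2 sum_distrib_left[symmetric])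
      qed
      have fin0: "finite S0" using S0sub finite_sub_interval by blast
      have lt0: "\<forall>y\<in>S0. y < Suc M" using S0sub by auto
      define m where "m = max0 S0"
      define M0 where "M0 = int (Mset S0)"
      have NS2: "NS M G2 K2 S0 = M0 * G2 m"
        unfolding K2_def M0_def m_def using NS_simpl[OF S0sub, of G2] by (simp add: G2_def)
      have S1eq: "S1 = (if a then insert (Suc M) S0 else S0)"
        unfolding S1_def S0_def a_def by auto
      have MS1: "int (Mset S1) = (if a then M0 * int (Suc M choose m) else M0)"
        using Mset_insert_top[OF fin0 lt0] S1eq unfolding M0_def m_def by simp
      have mS1: "max0 S1 = (if a then Suc M else m)"
        using max0_insert_top[OF fin0 lt0] S1eq unfolding m_def by simp
      have S1m: "S1 - {Suc M} = S0" unfolding S1_def S0_def by auto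
      have SuS0: "Suc M \<notin> S0" unfolding S0_def by auto
      have NS1: "NS (Suc M) g K1 S1 = (if a then M0 * K1 m else M0 * g m)"
        unfolding NS_def using S1eq S1m SuS0 unfolding M0_def m_def by auto
      have NSS: "NS (Suc (Suc M)) g k S = (if b then int (Mset S1) * k (max0 S1) else int (Mset S1) * g (max0 S1))"
        unfolding NS_def S1_def b_def by auto
      have SS: "S1 = S - {Suc (Suc M)}" by (simp add: S1_def)
      have "(\<Sum>w\<in>cdwords N. phi N g k w * int (fw w (uword N S))) = cC * NS (Suc M) g K1 S1 + dD * NS M G2 K2 S0"
        unfolding N sum_cdwords_SS_back sC sD ..
      also have "\<dots> = NS (Suc (Suc M)) g k S"
        unfolding NS1 NS2 NSS MS1 mS1 cC_def dD_def
        unfolding K1_def G2_def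
        using top by (cases a; cases b) (simp_all add: algebra_simps)
      finally show ?thesis using N by simp
    qed
  qed
qed

definition CH :: "nat set \<Rightarrow> nat list \<Rightarrow> nat set list set" where
  "CH X rs = {Ys. sorted_wrt (\<subset>) Ys \<and> map card Ys = rs \<and> (\<forall>Y\<in>set Ys. Y \<subset> X)}"

definition chainsF :: "nat set set \<Rightarrow> nat list \<Rightarrow> nat set list set" where
  "chainsF F rs = {Ys. set Ys \<subseteq> F \<and> sorted_wrt (\<subset>) Ys \<and> map card Ys = rs}"

lemma finite_lists_Pow: "finite X \<Longrightarrow> finite {Ys. set Ys \<subseteq> Pow X \<and> length Ys = l}"
  by (rule finite_lists_length_eq) simp

lemma finite_CH: "finite X \<Longrightarrow> finite (CH X rs)"
proof -
  assume X: "finite X"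
  have "CH X rs \<subseteq> {Ys. set Ys \<subseteq> Pow X \<and> length Ys = length rs}"
    unfolding CH_def by auto
  then show ?thesis using finite_lists_Pow[OF X] finite_subset by blast
qed

lemma finite_chainsF: "finite V \<Longrightarrow> F \<subseteq> Pow V \<Longrightarrow> finite (chainsF F rs)"
proof -
  assume V: "finite V" and F: "F \<subseteq> Pow V"
  have "chainsF F rs \<subseteq> {Ys. set Ys \<subseteq> Pow V \<and> length Ys = length rs}"
    unfolding chainsF_def using F by auto
  then show ?thesis using finite_lists_Pow[OF V] finite_subset by blast
qed

lemma snoc_split: "map f Ys = rs @ [r] \<Longrightarrow> \<exists>Ys' Y. Ys = Ys' @ [Y] \<and> map f Ys' = rs \<and> f Y = r"
proof -
  assume h: "map f Ys = rs @ [r]"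
  then have "Ys \<noteq> []" by auto
  then obtain Ys' Y where Y: "Ys = Ys' @ [Y]" by (cases Ys rule: rev_cases) auto
  then have "map f Ys' @ [f Y] = rs @ [r]" using h by simp
  then show ?thesis using Y by simp
qed

lemma CH_snoc:
  assumes "r < card X" "finite X"
  shows "CH X (rs @ [r]) = (\<Union>Y\<in>{Y. Y \<subseteq> X \<and> card Y = r}. (\<lambda>Ys. Ys @ [Y]) ` CH Y rs)"
proof
  show "CH X (rs @ [r]) \<subseteq> (\<Union>Y\<in>{Y. Y \<subseteq> X \<and> card Y = r}. (\<lambda>Ys. Ys @ [Y]) ` CH Y rs)"
  proof
    fix Ys assume "Ys \<in> CH X (rs @ [r])"
    then have h: "sorted_wrt (\<subset>) Ys" "map card Ys = rs @ [r]" "\<forall>Y\<in>set Ys. Y \<subset> X"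
      unfolding CH_def by auto
    obtain Ys' Y where Y: "Ys = Ys' @ [Y]" "map card Ys' = rs" "card Y = r"
      using snoc_split[OF h(2)] by blast
    have "Ys' \<in> CH Y rs" using h Y unfolding CH_def by (auto simp: sorted_wrt_append)
    moreover have "Y \<subseteq> X" using h(3) Y(1) by auto
    ultimately show "Ys \<in> (\<Union>Y\<in>{Y. Y \<subseteq> X \<and> card Y = r}. (\<lambda>Ys. Ys @ [Y]) ` CH Y rs)"
      using Y by blast
  qed
next
  show "(\<Union>Y\<in>{Y. Y \<subseteq> X \<and> card Y = r}. (\<lambda>Ys. Ys @ [Y]) ` CH Y rs) \<subseteq> CH X (rs @ [r])"
  proof clarify
    fix Y Ys assume Y: "Y \<subseteq> X" "r = card Y" and Ys: "Ys \<in> CH Y rs"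
    have "Y \<noteq> X" using Y assms by auto
    then have YX: "Y \<subset> X" using Y by auto
    show "Ys @ [Y] \<in> CH X (rs @ [card Y])"
      using Ys YX unfolding CH_def by (auto simp: sorted_wrt_append)
  qed
qed

lemma CH_count:
  "finite X \<Longrightarrow> sorted_wrt (<) (rs @ [card X]) \<Longrightarrow> card (CH X rs) = mb 0 (rs @ [card X])"
proof (induction rs arbitrary: X rule: rev_induct)
  case Nil
  have "CH X [] = {[]}" unfolding CH_def by auto
  then show ?case by simp
next
  case (snoc r rs)
  have r: "r < card X" using snoc.prems(2) by (simp add: sorted_wrt_append)
  have fin: "finite {Y. Y \<subseteq> X \<and> card Y = r}" using snoc.prems(1) by simp
  have "card (CH X (rs @ [r])) = (\<Sum>Y\<in>{Y. Y \<subseteq> X \<and> card Y = r}. card ((\<lambda>Ys. Ys @ [Y]) ` CH Y rs))"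
    unfolding CH_snoc[OF r snoc.prems(1)]
  proof (rule card_UN_disjoint[OF fin])
    show "\<forall>Y\<in>{Y. Y \<subseteq> X \<and> card Y = r}. finite ((\<lambda>Ys. Ys @ [Y]) ` CH Y rs)"
      using snoc.prems(1) finite_CH finite_subset by blast
    show "\<forall>Y1\<in>{Y. Y \<subseteq> X \<and> card Y = r}. \<forall>Y2\<in>{Y. Y \<subseteq> X \<and> card Y = r}. Y1 \<noteq> Y2 \<longrightarrow>
        (\<lambda>Ys. Ys @ [Y1]) ` CH Y1 rs \<inter> (\<lambda>Ys. Ys @ [Y2]) ` CH Y2 rs = {}"
      by auto
  qed
  also have "\<dots> = (\<Sum>Y\<in>{Y. Y \<subseteq> X \<and> card Y = r}. mb 0 (rs @ [r]))"
  proof (rule sum.cong)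
    fix Y assume Y: "Y \<in> {Y. Y \<subseteq> X \<and> card Y = r}"
    have finY: "finite Y" using Y snoc.prems(1) finite_subset by blast
    have "card ((\<lambda>Ys. Ys @ [Y]) ` CH Y rs) = card (CH Y rs)"
      by (rule card_image) (auto simp: inj_on_def)
    also have "\<dots> = mb 0 (rs @ [card Y])"
      using snoc.IH[OF finY] snoc.prems(2) Y by (simp add: sorted_wrt_append)
    finally show "card ((\<lambda>Ys. Ys @ [Y]) ` CH Y rs) = mb 0 (rs @ [r])" using Y by simp
  qed simp
  also have "\<dots> = (card X choose r) * mb 0 (rs @ [r])"
    using n_subsets[OF snoc.prems(1), of r] by simp
  also have "\<dots> = mb 0 ((rs @ [r]) @ [card X])"
    by (simp only: mb_append) simp
  finally show ?case .
qed

lemma chainsF_snoc: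
  assumes "\<forall>X\<in>F. \<forall>Y. Y \<subseteq> X \<and> Y \<noteq> {} \<longrightarrow> Y \<in> F" "0 \<notin> set rs"
  shows "chainsF F (rs @ [r]) = (\<Union>X\<in>{X\<in>F. card X = r}. (\<lambda>Ys. Ys @ [X]) ` CH X rs)"
proof
  show "chainsF F (rs @ [r]) \<subseteq> (\<Union>X\<in>{X\<in>F. card X = r}. (\<lambda>Ys. Ys @ [X]) ` CH X rs)"
  proof
    fix Ys assume "Ys \<in> chainsF F (rs @ [r])"
    then have h: "set Ys \<subseteq> F" "sorted_wrt (\<subset>) Ys" "map card Ys = rs @ [r]"
      unfolding chainsF_def by auto
    obtain Ys' Y where Y: "Ys = Ys' @ [Y]" "map card Ys' = rs" "card Y = r"
      using snoc_split[OF h(3)] by blast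
    have "Ys' \<in> CH Y rs" using h Y unfolding CH_def by (auto simp: sorted_wrt_append)
    moreover have "Y \<in> F" using h(1) Y(1) by auto
    ultimately show "Ys \<in> (\<Union>X\<in>{X\<in>F. card X = r}. (\<lambda>Ys. Ys @ [X]) ` CH X rs)"
      using Y by blast
  qed
next
  show "(\<Union>X\<in>{X\<in>F. card X = r}. (\<lambda>Ys. Ys @ [X]) ` CH X rs) \<subseteq> chainsF F (rs @ [r])"
  proof clarify
    fix X Ys assume X: "X \<in> F" "r = card X" and Ys: "Ys \<in> CH X rs"
    have "Y \<in> F" if "Y \<in> set Ys" for Y
    proof -
      have "Y \<subset> X" using Ys that unfolding CH_def by auto
      moreover have "card Y \<in> set rs" using Ys that unfolding CH_def by auto
      then have "Y \<noteq> {}" using assms(2) by auto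
      ultimately show ?thesis using assms(1) X by blast
    qed
    then show "Ys @ [X] \<in> chainsF F (rs @ [card X])"
      using Ys X unfolding CH_def chainsF_def by (auto simp: sorted_wrt_append)
  qed
qed

lemma chainsF_count:
  assumes V: "finite V" and FV: "F \<subseteq> Pow V"
    and dc: "\<forall>X\<in>F. \<forall>Y. Y \<subseteq> X \<and> Y \<noteq> {} \<longrightarrow> Y \<in> F"
    and s: "sorted_wrt (<) (rs @ [r])" and z: "0 \<notin> set rs"
  shows "card (chainsF F (rs @ [r])) = card {X\<in>F. card X = r} * mb 0 (rs @ [r])"
proof -
  have "finite (Pow V)" using V by simp
  then have finF: "finite F" using FV by (rule finite_subset[rotated])
  then have fin: "finite {X\<in>F. card X = r}" by simp
  have finX: "finite X" if "X \<in> F" for X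
  proof -
    have "X \<subseteq> V" using that FV by auto
    then show ?thesis using V by (rule finite_subset)
  qed
  have "card (chainsF F (rs @ [r])) = (\<Sum>X\<in>{X\<in>F. card X = r}. card ((\<lambda>Ys. Ys @ [X]) ` CH X rs))"
    unfolding chainsF_snoc[OF dc z]
  proof (rule card_UN_disjoint[OF fin])
    show "\<forall>X\<in>{X\<in>F. card X = r}. finite ((\<lambda>Ys. Ys @ [X]) ` CH X rs)"
      using finX finite_CH by blast
    show "\<forall>Y1\<in>{X\<in>F. card X = r}. \<forall>Y2\<in>{X\<in>F. card X = r}. Y1 \<noteq> Y2 \<longrightarrow>
        (\<lambda>Ys. Ys @ [Y1]) ` CH Y1 rs \<inter> (\<lambda>Ys. Ys @ [Y2]) ` CH Y2 rs = {}"
      by auto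
  qed
  also have "\<dots> = (\<Sum>X\<in>{X\<in>F. card X = r}. mb 0 (rs @ [r]))"
  proof (rule sum.cong)
    fix X assume X: "X \<in> {X\<in>F. card X = r}"
    have "card ((\<lambda>Ys. Ys @ [X]) ` CH X rs) = card (CH X rs)"
      by (rule card_image) (auto simp: inj_on_def)
    also have "\<dots> = mb 0 (rs @ [card X])"
      using CH_count[OF finX] X s by simp
    finally show "card ((\<lambda>Ys. Ys @ [X]) ` CH X rs) = mb 0 (rs @ [r])" using X by simp
  qed simp
  finally show ?thesis by simp
qed

lemma chainsF_Nil: "chainsF F [] = {[]}"
  unfolding chainsF_def by auto

lemma G_char:
  assumes "i < n"
  shows "X \<in> Gfaces n i \<longleftrightarrow> X \<noteq> {} \<and> X \<subseteq> {0..n} \<and> \<not> {0..i} \<subseteq> X"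
proof
  assume "X \<in> Gfaces n i"
  then obtain j where "X \<noteq> {}" "j \<le> i" "X \<subseteq> {0..n} - {j}" unfolding Gfaces_def facet_def by auto
  then show "X \<noteq> {} \<and> X \<subseteq> {0..n} \<and> \<not> {0..i} \<subseteq> X" by auto
next
  assume h: "X \<noteq> {} \<and> X \<subseteq> {0..n} \<and> \<not> {0..i} \<subseteq> X"
  then obtain j where "j \<le> i" "j \<notin> X" by auto
  then show "X \<in> Gfaces n i" using h unfolding Gfaces_def facet_def by auto
qed

lemma J_eq:
  assumes "R \<subseteq> {0..n}" "i < n"
  shows "{j. j \<le> i \<and> R \<subseteq> facet n j} = {j. j \<le> i \<and> j \<notin> R}"
  using assms unfolding facet_def by auto

lemma B_char:
  assumes "i < n"
  shows "X \<in> Bfaces n i \<longleftrightarrow> X \<noteq> {} \<and> X \<subseteq> {0..n} \<and> \<not> {0..i} \<subseteq> X \<and> \<not> {Suc i..n} \<subseteq> X"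
proof
  assume "X \<in> Bfaces n i"
  then obtain R where R: "X \<noteq> {}" "X \<subseteq> R" "R \<subseteq> {0..n}" "card R = n - 1"
      "card {j. j \<le> i \<and> R \<subseteq> facet n j} = 1"
    unfolding Bfaces_def by blast
  have J: "card {j. j \<le> i \<and> j \<notin> R} = 1" using R(5) J_eq[OF R(3) assms] by simp
  then obtain a where a: "{j. j \<le> i \<and> j \<notin> R} = {a}" using card_1_singletonE by blast
  then have "a \<le> i" "a \<notin> R" by auto
  then have n1: "\<not> {0..i} \<subseteq> X" using R(2) by auto
  have n2: "\<not> {Suc i..n} \<subseteq> X"
  proof
    assume "{Suc i..n} \<subseteq> X"
    then have sub: "{Suc i..n} \<subseteq> R" using R(2) by auto
    have cd: "card ({0..n} - R) = 2"
      using R(3,4) assms by (simp add: card_Diff_subset finite_subset)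
    have "x \<le> i" if x: "x \<le> n" "x \<notin> R" for x
    proof (rule ccontr)
      assume "\<not> x \<le> i"
      then have "x \<in> {Suc i..n}" using x by auto
      then show False using sub x by auto
    qed
    then have "{0..n} - R \<subseteq> {j. j \<le> i \<and> j \<notin> R}" by auto
    then have "card ({0..n} - R) \<le> card {j. j \<le> i \<and> j \<notin> R}"
      by (rule card_mono[rotated]) simp
    then show False using cd J by simp
  qed
  show "X \<noteq> {} \<and> X \<subseteq> {0..n} \<and> \<not> {0..i} \<subseteq> X \<and> \<not> {Suc i..n} \<subseteq> X"
    using R n1 n2 by auto
next
  assume h: "X \<noteq> {} \<and> X \<subseteq> {0..n} \<and> \<not> {0..i} \<subseteq> X \<and> \<not> {Suc i..n} \<subseteq> X"
  then obtain a where a: "a \<le> i" "a \<notin> X" by auto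
  from h obtain b where b: "Suc i \<le> b" "b \<le> n" "b \<notin> X" by auto
  define R where "R = {0..n} - {a, b}"
  have ab: "a \<noteq> b" using a b by auto
  have cR: "card R = n - 1"
    unfolding R_def using a b assms ab by (subst card_Diff_subset) auto
  have Rsub: "R \<subseteq> {0..n}" unfolding R_def by auto
  have "{j. j \<le> i \<and> R \<subseteq> facet n j} = {a}"
    unfolding J_eq[OF Rsub assms] using a b assms unfolding R_def by auto
  then have J: "card {j. j \<le> i \<and> R \<subseteq> facet n j} = 1" by simp
  have XR: "X \<subseteq> R" using h a b unfolding R_def by auto
  have "X \<noteq> {}" using h by simp
  then show "X \<in> Bfaces n i" unfolding Bfaces_def mem_Collect_eq using XR Rsub cR J by blast
qed

lemma count_sup:
  assumes V: "finite V" and W: "W \<subseteq> V"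
  shows "card {X. X \<subseteq> V \<and> card X = m \<and> W \<subseteq> X} = (if card W \<le> m then card (V - W) choose (m - card W) else 0)"
proof (cases "card W \<le> m")
  case True
  have finW: "finite W" using V W finite_subset by blast
  have "bij_betw (\<lambda>X. X - W) {X. X \<subseteq> V \<and> card X = m \<and> W \<subseteq> X} {Y. Y \<subseteq> V - W \<and> card Y = m - card W}"
  proof (rule bij_betw_byWitness[where f' = "\<lambda>Y. Y \<union> W"])
    show "\<forall>X\<in>{X. X \<subseteq> V \<and> card X = m \<and> W \<subseteq> X}. X - W \<union> W = X" by auto
    show "\<forall>Y\<in>{Y. Y \<subseteq> V - W \<and> card Y = m - card W}. Y \<union> W - W = Y" by auto
    show "(\<lambda>X. X - W) ` {X. X \<subseteq> V \<and> card X = m \<and> W \<subseteq> X} \<subseteq> {Y. Y \<subseteq> V - W \<and> card Y = m - card W}"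
    proof clarify
      fix X assume X: "X \<subseteq> V" "m = card X" "W \<subseteq> X"
      then show "X - W \<subseteq> V - W \<and> card (X - W) = card X - card W"
        using finW by (auto simp: card_Diff_subset)
    qed
    show "(\<lambda>Y. Y \<union> W) ` {Y. Y \<subseteq> V - W \<and> card Y = m - card W} \<subseteq> {X. X \<subseteq> V \<and> card X = m \<and> W \<subseteq> X}"
    proof clarify
      fix Y assume Y: "Y \<subseteq> V - W" "card Y = m - card W"
      have finY: "finite Y" using Y V finite_subset by blast
      have "card (Y \<union> W) = card Y + card W"
        using Y finY finW by (subst card_Un_disjoint) auto
      then show "Y \<union> W \<subseteq> V \<and> card (Y \<union> W) = m \<and> W \<subseteq> Y \<union> W" using Y W True by auto
    qed
  qed
  then have "card {X. X \<subseteq> V \<and> card X = m \<and> W \<subseteq> X} = card {Y. Y \<subseteq> V - W \<and> card Y = m - card W}"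
    by (rule bij_betw_same_card)
  also have "\<dots> = card (V - W) choose (m - card W)"
    using V by (simp add: n_subsets)
  finally show ?thesis using True by simp
next
  case False
  have e: "{X. X \<subseteq> V \<and> card X = m \<and> W \<subseteq> X} = {}"
  proof (rule equals0I)
    fix X assume X: "X \<in> {X. X \<subseteq> V \<and> card X = m \<and> W \<subseteq> X}"
    then have "finite X" using V finite_subset by blast
    then have "card W \<le> card X" using X card_mono by blast
    then show False using X False by auto
  qed
  show ?thesis unfolding e using False by simp
qed

definition gL :: "nat \<Rightarrow> nat \<Rightarrow> nat \<Rightarrow> int" where
  "gL n i m = int (Suc n choose m) - cb (n - i) (Suc i) m"

definition bL :: "nat \<Rightarrow> nat \<Rightarrow> nat \<Rightarrow> int" where
  "bL n i m = int (Suc n choose m) - cb (n - i) (Suc i) m - cb (Suc i) (n - i) m"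

definition kL :: "nat \<Rightarrow> nat \<Rightarrow> nat \<Rightarrow> int" where
  "kL n i m = int (n choose m) * gL n i n + bL n i m"

lemma gcount:
  assumes "i < n" "1 \<le> m"
  shows "int (card {X\<in>Gfaces n i. card X = m}) = gL n i m"
proof -
  let ?A = "{X. X \<subseteq> {0..n} \<and> card X = m}"
  let ?B = "{X. X \<subseteq> {0..n} \<and> card X = m \<and> {0..i} \<subseteq> X}"
  have eq: "{X\<in>Gfaces n i. card X = m} = ?A - ?B"
    using assms by (auto simp: G_char)
  have "card (?A - ?B) = card ?A - card ?B"
    by (rule card_Diff_subset) (auto intro: finite_subset[of _ "Pow {0..n}"])
  moreover have "card ?B \<le> card ?A"
    by (rule card_mono) (auto intro: finite_subset[of _ "Pow {0..n}"])
  moreover have "card ?A = Suc n choose m" by (simp add: n_subsets)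
  moreover have "int (card ?B) = cb (n - i) (Suc i) m"
    using count_sup[of "{0..n}" "{0..i}" m] assms
    by (simp add: cb_def card_Diff_subset)
  ultimately show ?thesis unfolding eq gL_def by simp
qed

lemma bcount:
  assumes "i < n" "1 \<le> m" "m < n"
  shows "int (card {X\<in>Bfaces n i. card X = m}) = bL n i m"
proof -
  let ?A = "{X. X \<subseteq> {0..n} \<and> card X = m}"
  let ?B1 = "{X. X \<subseteq> {0..n} \<and> card X = m \<and> {0..i} \<subseteq> X}"
  let ?B2 = "{X. X \<subseteq> {0..n} \<and> card X = m \<and> {Suc i..n} \<subseteq> X}"
  have fA: "finite ?A" by (auto intro: finite_subset[of _ "Pow {0..n}"])
  have eq: "{X\<in>Bfaces n i. card X = m} = ?A - (?B1 \<union> ?B2)"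
    using assms by (auto simp: B_char)
  have disj: "?B1 \<inter> ?B2 = {}"
  proof -
    have False if "X \<in> ?B1" "X \<in> ?B2" for X
    proof -
      have "{0..n} = {0..i} \<union> {Suc i..n}" using assms by auto
      then have "{0..n} \<subseteq> X" using that by auto
      then have "card {0..n} \<le> card X" using that by (intro card_mono) (auto intro: finite_subset)
      then show False using that assms by simp
    qed
    then show ?thesis by blast
  qed
  have "card (?A - (?B1 \<union> ?B2)) = card ?A - card (?B1 \<union> ?B2)"
    by (rule card_Diff_subset) (auto intro: finite_subset[OF _ fA])
  moreover have "card (?B1 \<union> ?B2) = card ?B1 + card ?B2"
    by (rule card_Un_disjoint) (auto intro: finite_subset[OF _ fA] simp: disj)
  moreover have "card (?B1 \<union> ?B2) \<le> card ?A"
    by (rule card_mono[OF fA]) auto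
  moreover have "card ?A = Suc n choose m" by (simp add: n_subsets)
  moreover have "int (card ?B1) = cb (n - i) (Suc i) m"
    using count_sup[of "{0..n}" "{0..i}" m] assms
    by (simp add: cb_def card_Diff_subset)
  moreover have "{0..n} - {Suc i..n} = {0..i}" using assms by auto
  then have "int (card ?B2) = cb (Suc i) (n - i) m"
    using count_sup[of "{0..n}" "{Suc i..n}" m] assms
    by (simp add: cb_def card_Diff_subset)
  ultimately show ?thesis unfolding eq bL_def by simp
qed

lemma BsubG: "i < n \<Longrightarrow> Bfaces n i \<subseteq> Gfaces n i"
  by (auto simp: B_char G_char)

lemma crank_Some: "crank n \<circ> Some = card"
  by (rule ext) simp

lemma none_free: "None \<notin> set xs \<Longrightarrow> xs = map Some (map the xs)"
  by (induction xs) auto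

lemma sorted_cless_Some: "sorted_wrt (cless n i) (map Some Ys) \<longleftrightarrow> sorted_wrt (\<subset>) Ys"
  by (simp add: sorted_wrt_map)

lemma sorted_cless_None:
  "sorted_wrt (cless n i) (map Some Ys @ [None]) \<longleftrightarrow> sorted_wrt (\<subset>) Ys \<and> (\<forall>Y\<in>set Ys. Y \<in> Bfaces n i)"
  by (simp add: sorted_wrt_append sorted_wrt_map)

lemma map_Some_neq: "map Some xa \<noteq> map Some Ys @ [None]"
proof
  assume eq: "map Some xa = map Some Ys @ [None]"
  have "None \<in> set (map Some Ys @ [None])" by simp
  then have "None \<in> set (map Some xa)" by (simp only: eq)
  then show False by auto
qed

lemma flag_set:
  assumes BG: "Bfaces n i \<subseteq> Gfaces n i"
  shows "{xs. set xs \<subseteq> cells n i \<and> sorted_wrt (cless n i) xs \<and> map (crank n) xs = rs}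
    = map Some ` chainsF (Gfaces n i) rs \<union>
      (\<lambda>Ys. map Some Ys @ [None]) ` {Ys. set Ys \<subseteq> Bfaces n i \<and> sorted_wrt (\<subset>) Ys \<and> map card Ys @ [n] = rs}"
    (is "?L = ?A \<union> ?B")
proof
  show "?L \<subseteq> ?A \<union> ?B"
  proof
    fix xs assume "xs \<in> ?L"
    then have xs: "set xs \<subseteq> cells n i" "sorted_wrt (cless n i) xs" "map (crank n) xs = rs" by auto
    show "xs \<in> ?A \<union> ?B"
    proof (cases "None \<in> set xs")
      case False
      define Ys where "Ys = map the xs"
      have e: "xs = map Some Ys" unfolding Ys_def using none_free[OF False] .
      have "set Ys \<subseteq> Gfaces n i" using xs(1) unfolding e cells_def by auto
      moreover have "sorted_wrt (\<subset>) Ys" using xs(2) unfolding e sorted_cless_Some .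
      moreover have "map card Ys = rs" using xs(3) unfolding e by (simp add: crank_Some)
      ultimately have "Ys \<in> chainsF (Gfaces n i) rs" unfolding chainsF_def by blast
      then show ?thesis using e by blast
    next
      case True
      then obtain a b where ab: "xs = a @ None # b" by (meson split_list)
      have sb: "sorted_wrt (cless n i) (None # b)" using xs(2) ab sorted_wrt_append by blast
      have "b = []"
      proof (cases b)
        case (Cons y b')
        then show ?thesis using sb by auto
      qed simp
      have aN: "None \<notin> set a"
      proof
        assume "None \<in> set a"
        then have "cless n i None None" using xs(2) ab by (auto simp: sorted_wrt_append)
        then show False by simp
      qed
      define Ys where "Ys = map the a"
      have e: "xs = map Some Ys @ [None]" unfolding Ys_def using none_free[OF aN] ab \<open>b = []\<close> by simp
      have "sorted_wrt (\<subset>) Ys \<and> (\<forall>Y\<in>set Ys. Y \<in> Bfaces n i)" using xs(2) unfolding e sorted_cless_None .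
      moreover have "map card Ys @ [n] = rs" using xs(3) unfolding e by (simp add: crank_Some)
      ultimately have "Ys \<in> {Ys. set Ys \<subseteq> Bfaces n i \<and> sorted_wrt (\<subset>) Ys \<and> map card Ys @ [n] = rs}" by auto
      then show ?thesis using e by blast
    qed
  qed
next
  show "?A \<union> ?B \<subseteq> ?L"
  proof
    fix xs assume "xs \<in> ?A \<union> ?B"
    then show "xs \<in> ?L"
    proof
      assume "xs \<in> ?A"
      then obtain Ys where Ys: "xs = map Some Ys" "Ys \<in> chainsF (Gfaces n i) rs" by blast
      then show ?thesis unfolding chainsF_def cells_def by (auto simp: sorted_cless_Some crank_Some)
    next
      assume "xs \<in> ?B"
      then obtain Ys where Ys: "xs = map Some Ys @ [None]" "set Ys \<subseteq> Bfaces n i" "sorted_wrt (\<subset>) Ys" "map card Ys @ [n] = rs"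
        by blast
      then show ?thesis using BG unfolding cells_def by (auto simp: sorted_cless_None crank_Some)
    qed
  qed
qed

lemma flagf_split:
  assumes "i < n"
  shows "flagf n i T = card (chainsF (Gfaces n i) (sorted_list_of_set T)) +
     card {Ys. set Ys \<subseteq> Bfaces n i \<and> sorted_wrt (\<subset>) Ys \<and> map card Ys @ [n] = sorted_list_of_set T}"
proof -
  let ?rs = "sorted_list_of_set T"
  let ?A = "chainsF (Gfaces n i) ?rs"
  let ?B = "{Ys. set Ys \<subseteq> Bfaces n i \<and> sorted_wrt (\<subset>) Ys \<and> map card Ys @ [n] = ?rs}"
  have GP: "Gfaces n i \<subseteq> Pow {0..n}" using G_char[OF assms] by blast
  have BP: "Bfaces n i \<subseteq> Pow {0..n}" using B_char[OF assms] by blast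
  have finA: "finite ?A" by (rule finite_chainsF[OF _ GP]) simp
  have "?B \<subseteq> {Ys. set Ys \<subseteq> Pow {0..n} \<and> length Ys = length ?rs - 1}"
    using BP by (auto dest: arg_cong[of _ _ length])
  then have finB: "finite ?B" using finite_lists_Pow[of "{0..n}"] finite_subset by blast
  have "flagf n i T = card (map Some ` ?A \<union> (\<lambda>Ys. map Some Ys @ [None]) ` ?B)"
    unfolding flagf_def flag_set[OF BsubG[OF assms]] ..
  also have "\<dots> = card (map Some ` ?A) + card ((\<lambda>Ys. map Some Ys @ [None]) ` ?B)"
    by (rule card_Un_disjoint) (use finA finB map_Some_neq in auto)
  also have "card (map Some ` ?A) = card ?A"
    by (rule card_image) (simp add: inj_on_def)
  also have "card ((\<lambda>Ys. map Some Ys @ [None]) ` ?B) = card ?B"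
    by (rule card_image) (simp add: inj_on_def)
  finally show ?thesis .
qed

lemma dcG: assumes i: "i < n" shows "\<forall>X\<in>Gfaces n i. \<forall>Y. Y \<subseteq> X \<and> Y \<noteq> {} \<longrightarrow> Y \<in> Gfaces n i"
proof (intro ballI allI impI)
  fix X Y assume X: "X \<in> Gfaces n i" and Y: "Y \<subseteq> X \<and> Y \<noteq> {}"
  have "X \<noteq> {} \<and> X \<subseteq> {0..n} \<and> \<not> {0..i} \<subseteq> X" using X G_char[OF i] by simp
  then have "Y \<noteq> {} \<and> Y \<subseteq> {0..n} \<and> \<not> {0..i} \<subseteq> Y" using Y by blast
  then show "Y \<in> Gfaces n i" using G_char[OF i] by simp
qed

lemma dcB: assumes i: "i < n" shows "\<forall>X\<in>Bfaces n i. \<forall>Y. Y \<subseteq> X \<and> Y \<noteq> {} \<longrightarrow> Y \<in> Bfaces n i"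
proof (intro ballI allI impI)
  fix X Y assume X: "X \<in> Bfaces n i" and Y: "Y \<subseteq> X \<and> Y \<noteq> {}"
  have "X \<noteq> {} \<and> X \<subseteq> {0..n} \<and> \<not> {0..i} \<subseteq> X \<and> \<not> {Suc i..n} \<subseteq> X" using X B_char[OF i] by simp
  then have "Y \<noteq> {} \<and> Y \<subseteq> {0..n} \<and> \<not> {0..i} \<subseteq> Y \<and> \<not> {Suc i..n} \<subseteq> Y" using Y by blast
  then show "Y \<in> Bfaces n i" using B_char[OF i] by simp
qed

lemma chains_count_gen:
  assumes "finite V" "F \<subseteq> Pow V" "\<forall>X\<in>F. \<forall>Y. Y \<subseteq> X \<and> Y \<noteq> {} \<longrightarrow> Y \<in> F"
    "sorted_wrt (<) rs" "0 \<notin> set rs" "rs \<noteq> []"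
  shows "card (chainsF F rs) = card {X\<in>F. card X = last rs} * mb 0 rs"
proof -
  have e: "rs = butlast rs @ [last rs]" using assms(6) by simp
  have z: "0 \<notin> set (butlast rs)" using assms(5) in_set_butlastD by fastforce
  have s: "sorted_wrt (<) (butlast rs @ [last rs])" using assms(4) e by simp
  show ?thesis using chainsF_count[OF assms(1-3) s z] e by simp
qed

lemma FL:
  assumes i: "i < n" and T: "T \<subseteq> {1..n}"
  shows "int (flagf n i T) = NS n (gL n i) (kL n i) T"
proof -
  have finT: "finite T" using T finite_subset by blast
  define rs where "rs = sorted_list_of_set T"
  have srs: "sorted_wrt (<) rs" unfolding rs_def by (rule strict_sorted_list_of_set)
  have setrs: "set rs = T" unfolding rs_def using finT by simp
  have z: "0 \<notin> set rs" using setrs T by auto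
  have GP: "Gfaces n i \<subseteq> Pow {0..n}" using G_char[OF i] by blast
  have BP: "Bfaces n i \<subseteq> Pow {0..n}" using B_char[OF i] by blast
  note dG = dcG[OF i] and dB = dcB[OF i]
  have split: "flagf n i T = card (chainsF (Gfaces n i) rs) +
     card {Ys. set Ys \<subseteq> Bfaces n i \<and> sorted_wrt (\<subset>) Ys \<and> map card Ys @ [n] = rs}"
    unfolding rs_def by (rule flagf_split[OF i])
  have gn: "int (card {X\<in>Gfaces n i. card X = n}) = gL n i n" using gcount[OF i] i by simp
  show ?thesis
  proof (cases "n \<in> T")
    case False
    have B0: "{Ys. set Ys \<subseteq> Bfaces n i \<and> sorted_wrt (\<subset>) Ys \<and> map card Ys @ [n] = rs} = {}"
    proof (rule equals0I)
      fix Ys assume "Ys \<in> {Ys. set Ys \<subseteq> Bfaces n i \<and> sorted_wrt (\<subset>) Ys \<and> map card Ys @ [n] = rs}"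
      then have e: "map card Ys @ [n] = rs" by simp
      have "n \<in> set (map card Ys @ [n])" by simp
      then have "n \<in> set rs" by (simp only: e)
      then show False using False setrs by simp
    qed
    show ?thesis
    proof (cases "T = {}")
      case True
      then have "rs = []" unfolding rs_def by simp
      then show ?thesis using split B0 True False by (simp add: chainsF_Nil NS_def gL_def cb_def)
    next
      case Tne: False
      then have rne: "rs \<noteq> []" using setrs by auto
      have l: "last rs \<in> T" using rne setrs by auto
      have ml: "max0 T = last rs" unfolding max0_def rs_def[symmetric] using rne by simp
      have MT: "Mset T = mb 0 rs" unfolding Mset_def rs_def ..
      have "card (chainsF (Gfaces n i) rs) = card {X\<in>Gfaces n i. card X = last rs} * mb 0 rs"
        by (rule chains_count_gen[OF _ GP dG srs z rne]) simp
      moreover have "int (card {X\<in>Gfaces n i. card X = last rs}) = gL n i (last rs)"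
        using gcount[OF i] l T by auto
      ultimately show ?thesis using split B0 False unfolding NS_def ml MT by simp
    qed
  next
    case True
    define T0 where "T0 = T - {n}"
    have fin0: "finite T0" unfolding T0_def using finT by simp
    have lt0: "\<forall>y\<in>T0. y < n" unfolding T0_def using T by auto
    have TT: "T = insert n T0" unfolding T0_def using True by auto
    define rs0 where "rs0 = sorted_list_of_set T0"
    have rs: "rs = rs0 @ [n]" unfolding rs_def rs0_def TT
      by (rule sls_insert_top[OF fin0 lt0])
    have set0: "set rs0 = T0" unfolding rs0_def using fin0 by simp
    have srs0: "sorted_wrt (<) rs0" unfolding rs0_def by (rule strict_sorted_list_of_set)
    have z0: "0 \<notin> set rs0" using set0 T unfolding T0_def by auto
    have A: "card (chainsF (Gfaces n i) rs) = card {X\<in>Gfaces n i. card X = n} * (Mset T0 * (n choose max0 T0))"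
    proof -
      have "card (chainsF (Gfaces n i) rs) = card {X\<in>Gfaces n i. card X = last rs} * mb 0 rs"
        by (rule chains_count_gen[OF _ GP dG srs z]) (simp_all add: rs)
      then show ?thesis unfolding rs mb_append Mset_def max0_def rs0_def[symmetric] by simp
    qed
    have Beq: "{Ys. set Ys \<subseteq> Bfaces n i \<and> sorted_wrt (\<subset>) Ys \<and> map card Ys @ [n] = rs} = chainsF (Bfaces n i) rs0"
      unfolding rs chainsF_def by simp
    have NST: "NS n (gL n i) (kL n i) T = int (Mset T0) * kL n i (max0 T0)"
      unfolding NS_def T0_def using True by simp
    show ?thesis
    proof (cases "T0 = {}")
      case True
      then have "rs0 = []" unfolding rs0_def by simp
      then show ?thesis using split A Beq NST True gn i
        by (simp add: chainsF_Nil kL_def bL_def cb_def)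
    next
      case False
      then have rne: "rs0 \<noteq> []" using set0 by auto
      have l: "last rs0 \<in> T0" using rne set0 by auto
      have ml: "max0 T0 = last rs0" unfolding max0_def rs0_def[symmetric] using rne by simp
      have MT: "Mset T0 = mb 0 rs0" unfolding Mset_def rs0_def ..
      have "card (chainsF (Bfaces n i) rs0) = card {X\<in>Bfaces n i. card X = last rs0} * mb 0 rs0"
        by (rule chains_count_gen[OF _ BP dB srs0 z0 rne]) simp
      moreover have "int (card {X\<in>Bfaces n i. card X = last rs0}) = bL n i (last rs0)"
      proof -
        have "last rs0 \<in> set rs0" using l set0 by simp
        then have "last rs0 \<noteq> 0" using z0 by metis
        moreover have "last rs0 < n" using l lt0 by auto
        ultimately show ?thesis using bcount[OF i, of "last rs0"] by simp
      qed
      ultimately show ?thesis using split A Beq NST gn unfolding ml MT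
        by (simp add: kL_def algebra_simps)
    qed
  qed
qed

lemma partial_cb:
  assumes "A + B = Suc n"
  shows "(\<Sum>j<n. (-1) ^ j * int (j choose m) * cb A B j)
    = (-1) ^ Suc n * cb B A m - (-1) ^ n * int (n choose m) * cb A B n - (-1) ^ Suc n * int (Suc n choose m) * cb A B (Suc n)"
proof -
  have "(\<Sum>j<Suc (Suc n). (-1) ^ j * int (j choose m) * cb A B j) = (-1) ^ (A + B) * cb B A m"
    by (rule alt_cb) (simp add: assms)
  then show ?thesis using assms by (simp add: algebra_simps)
qed

lemma choose_pred: "Suc k choose k = Suc k"
  by (simp add: binomial_Suc_n)

lemma EE_Lambda:
  assumes i: "i < n"
  shows "EE n (gL n i) (kL n i)"
proof -
  define s :: int where "s = (-1) ^ n"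
  have G: "gL n i n = int (Suc i)"
  proof -
    have "n - i = Suc (n - Suc i)" using i by simp
    then have "cb (n - i) (Suc i) n = int (n - i)" using i by (simp add: cb_def choose_pred)
    then show ?thesis unfolding gL_def using i by (simp add: of_nat_diff)
  qed
  have c1: "cb (n - i) (Suc i) n = int n - int i"
  proof -
    have "n - i = Suc (n - Suc i)" using i by simp
    then show ?thesis using i by (simp add: cb_def choose_pred of_nat_diff)
  qed
  have c2: "cb (n - i) (Suc i) (Suc n) = 1" using i by (simp add: cb_def)
  have c3: "cb (Suc i) (n - i) n = int (Suc i)"
  proof -
    have "n - (n - i) = i" using i by simp
    then show ?thesis using i by (simp add: cb_def choose_pred)
  qed
  have c4: "cb (Suc i) (n - i) (Suc n) = 1"
  proof -
    have "Suc n - (n - i) = Suc i" using i by simp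
    then show ?thesis using i by (simp add: cb_def)
  qed
  show ?thesis unfolding EE_def
  proof (intro conjI allI impI)
    fix m assume m: "m < n"
    define Q1 where "Q1 = (\<Sum>j<n. (-1) ^ j * int (j choose m) * int (Suc n choose j))"
    define Q2 where "Q2 = (\<Sum>j<n. (-1) ^ j * int (j choose m) * cb (n - i) (Suc i) j)"
    define Q3 where "Q3 = (\<Sum>j<n. (-1) ^ j * int (j choose m) * cb (Suc i) (n - i) j)"
    define Q0 where "Q0 = (\<Sum>j<n. (-1) ^ j * int (j choose m) * int (n choose j))"
    have q1: "Q1 = - s * 0 - s * int (n choose m) * (int n + 1) + s * int (Suc n choose m)"
      using partial_cb[of "Suc n" 0 n m] m unfolding Q1_def s_def by (simp add: cb_def)
    have q2: "Q2 = - s * cb (Suc i) (n - i) m - s * int (n choose m) * (int n - int i) + s * int (Suc n choose m)"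
      using partial_cb[of "n - i" "Suc i" n m] i c1 c2 unfolding Q2_def s_def by simp
    have q3: "Q3 = - s * cb (n - i) (Suc i) m - s * int (n choose m) * int (Suc i) + s * int (Suc n choose m)"
      using partial_cb[of "Suc i" "n - i" n m] i c3 c4 unfolding Q3_def s_def by simp
    have q0: "Q0 = - (s * int (n choose m))"
      using binom_partial[OF m] unfolding Q0_def s_def .
    have sg: "(\<Sum>j<n. (-1) ^ j * int (j choose m) * gL n i j) = Q1 - Q2"
      unfolding Q1_def Q2_def gL_def by (simp add: sum_subtractf algebra_simps)
    have sk: "(\<Sum>j<n. (-1) ^ j * int (j choose m) * kL n i j) = int (Suc i) * Q0 + Q1 - Q2 - Q3"
      unfolding Q0_def Q1_def Q2_def Q3_def kL_def bL_def G
      by (simp add: sum_subtractf sum.distrib sum_distrib_left algebra_simps)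
    show "(\<Sum>j<n. (-1) ^ j * int (j choose m) * gL n i j) = (-1) ^ n * (gL n i m - kL n i m)"
      unfolding sg s_def[symmetric] q1 q2 unfolding kL_def bL_def G unfolding gL_def by (simp add: algebra_simps)
    show "(\<Sum>j<n. (-1) ^ j * int (j choose m) * kL n i j) = - ((-1) ^ n * kL n i m)"
      unfolding sk s_def[symmetric] q0 q1 q2 q3 unfolding kL_def bL_def G by (simp add: algebra_simps)
  qed
qed

lemma fvec_diff: "fvec n (\<lambda>w. f w - g w) S = fvec n f S - fvec n g S"
  unfolding fvec_def by (simp add: abcoef_diff sum_subtractf)

lemma cdindex_fvec:
  assumes i: "i < n" and S: "S \<subseteq> {1..n}"
  shows "fvec n (cdindex n i) S = int (flagf n i S)"
proof -
  define \<Phi>0 where "\<Phi>0 = phi n (gL n i) (kL n i)"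
  have E: "EE n (gL n i) (kL n i)" by (rule EE_Lambda[OF i])
  have F: "fvec n \<Phi>0 T = int (flagf n i T)" if T: "T \<subseteq> {1..n}" for T
    unfolding fvec_fw[OF T] \<Phi>0_def exist[OF E T] FL[OF i T] ..
  have supp: "\<forall>w. cdeg w \<noteq> n \<longrightarrow> \<Phi>0 w = 0"
    unfolding \<Phi>0_def using phi_supp by blast
  have ab: "\<forall>S. S \<subseteq> {1..n} \<longrightarrow> abcoef \<Phi>0 (uword n S) = flagh n i S"
  proof (intro allI impI)
    fix S assume S: "S \<subseteq> {1..n}"
    have finS: "finite S" using S finite_subset by blast
    have "abcoef \<Phi>0 (uword n S) = (\<Sum>T\<in>Pow S. (-1) ^ card (S - T) * int (flagf n i T))"
    proof (rule moebius_inv[OF finS, where a = "\<lambda>U. abcoef \<Phi>0 (uword n U)"])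
      fix T assume "T \<subseteq> S"
      then have "T \<subseteq> {1..n}" using S by blast
      then show "int (flagf n i T) = (\<Sum>U\<in>Pow T. abcoef \<Phi>0 (uword n U))"
        using F unfolding fvec_def by simp
    qed
    then show "abcoef \<Phi>0 (uword n S) = flagh n i S" unfolding flagh_def by simp
  qed
  have "cdindex n i = \<Phi>0" by (rule cdindex_eq[OF supp ab])
  then show ?thesis using F[OF S] by simp
qed

lemma checkPhi_fvec:
  assumes "1 \<le> i" "i < n" "S \<subseteq> {1..n}"
  shows "fvec n (checkPhi n i) S = NS n (gL n i) (kL n i) S - NS n (gL n (i - 1)) (kL n (i - 1)) S"
proof -
  have "fvec n (checkPhi n i) S = fvec n (cdindex n i) S - fvec n (cdindex n (i - 1)) S"
    unfolding checkPhi_def using assms(1) by (simp add: fvec_diff)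
  also have "\<dots> = int (flagf n i S) - int (flagf n (i - 1) S)"
    using cdindex_fvec[OF assms(2,3)] cdindex_fvec[of "i - 1" n S] assms by simp
  also have "\<dots> = NS n (gL n i) (kL n i) S - NS n (gL n (i - 1)) (kL n (i - 1)) S"
    using FL[OF assms(2,3)] FL[of "i - 1" n S] assms by simp
  finally show ?thesis .
qed

lemma pascal_cb: "cb (Suc a) b m - cb a (Suc b) m = cb a b m"
proof (cases "b \<le> m")
  case True
  show ?thesis
  proof (cases "b = m")
    case True then show ?thesis by (simp add: cb_def)
  next
    case False
    then have "m - b = Suc (m - Suc b)" using True by simp
    then show ?thesis using True False by (simp add: cb_def)
  qed
next
  case False then show ?thesis by (simp add: cb_def)
qed

lemma gL_n: "i < n \<Longrightarrow> gL n i n = int (Suc i)"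
proof -
  assume i: "i < n"
  have "n - i = Suc (n - Suc i)" using i by simp
  then have "cb (n - i) (Suc i) n = int (n - i)" using i by (simp add: cb_def choose_pred)
  then show ?thesis unfolding gL_def using i by (simp add: of_nat_diff)
qed

lemma diff_g:
  assumes "1 \<le> i" "i < n"
  shows "gL n i m - gL n (i - 1) m = cb (n - i) i m"
proof -
  have e1: "n - (i - 1) = Suc (n - i)" "Suc (i - 1) = i" using assms by auto
  show ?thesis unfolding gL_def e1 using pascal_cb[of "n - i" i m] by simp
qed

lemma diff_k:
  assumes "1 \<le> i" "i < n"
  shows "kL n i m - kL n (i - 1) m = int (n choose m) + cb (n - i) i m - cb i (n - i) m"
proof -
  have e1: "n - (i - 1) = Suc (n - i)" "Suc (i - 1) = i" using assms by auto
  have g1: "gL n i n = int (Suc i)" using gL_n assms by simp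
  have g2: "gL n (i - 1) n = int i" using gL_n[of "i - 1" n] assms by simp
  show ?thesis unfolding kL_def bL_def g1 g2 e1
    using pascal_cb[of "n - i" i m] pascal_cb[of i "n - i" m] by (simp add: algebra_simps)
qed

lemma prod1:
  assumes "i \<le> n" "m \<le> n"
  shows "int (n choose i) * cb (n - i) i m = int (n choose m) * int (m choose i)"
proof (cases "i \<le> m")
  case True
  have "(n choose m) * (m choose i) = (n choose i) * ((n - i) choose (m - i))"
    by (rule choose_mult[OF True assms(2)])
  then show ?thesis using True unfolding cb_def by (simp flip: of_nat_mult)
next
  case False then show ?thesis by (simp add: cb_def)
qed

lemma prod2:
  assumes "i \<le> n" "m \<le> n"
  shows "int (n choose i) * cb i (n - i) m = int (n choose m) * int (m choose (n - i))"
proof (cases "n - i \<le> m")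
  case True
  define k where "k = n - m"
  have ki: "k \<le> i" using True assms unfolding k_def by simp
  have a1: "m - (n - i) = i - k" using True assms unfolding k_def by simp
  have a2: "i choose (i - k) = i choose k" using ki by (metis binomial_symmetric diff_diff_cancel)
  have a3: "(n choose i) * (i choose k) = (n choose k) * ((n - k) choose (i - k))"
    by (rule choose_mult[OF ki assms(1)])
  have a4: "n choose k = n choose m" unfolding k_def using assms(2) by (metis binomial_symmetric)
  have a5: "n - k = m" unfolding k_def using assms by simp
  have a6: "m choose (i - k) = m choose (n - i)"
  proof -
    have "i - k \<le> m" using assms True unfolding k_def by simp
    moreover have "m - (i - k) = n - i" using assms True unfolding k_def by simp
    ultimately show ?thesis by (metis binomial_symmetric)
  qed
  show ?thesis using True unfolding cb_def a1 a2
    using a3 a4 a5 a6 by (simp flip: of_nat_mult)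
next
  case False then show ?thesis by (simp add: cb_def)
qed

lemma sign_rev: "odd n \<Longrightarrow> j \<le> n \<Longrightarrow> (-1::int) ^ (n - j) = - ((-1) ^ j)"
proof -
  assume n: "odd n" and j: "j \<le> n"
  have "even (n - j) \<longleftrightarrow> odd j" using n j by (auto simp: even_diff_nat)
  then show ?thesis by (simp add: minus_one_power_iff)
qed

lemma core:
  assumes n: "odd n" and m: "m < n"
  shows "(\<Sum>i = n div 2 + 1..n - 1. (-1) ^ i * (int (m choose i) - int (m choose (n - i))))
    = (if m = 0 then 0 else -1)"
proof -
  let ?h = "n div 2 + 1"
  have nd: "n = 2 * (n div 2) + 1" using n by simp
  have A: "(\<Sum>i = ?h..n - 1. (-1) ^ i * int (m choose (n - i))) = - (\<Sum>j = 1..n div 2. (-1) ^ j * int (m choose j))"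
  proof -
    have "(\<Sum>i = ?h..n - 1. (-1) ^ i * int (m choose (n - i))) = (\<Sum>j = 1..n div 2. (-1) ^ (n - j) * int (m choose j))"
    proof (rule sum.reindex_bij_witness[where i = "\<lambda>j. n - j" and j = "\<lambda>i. n - i"])
      fix j assume "j \<in> {1..n div 2}"
      then show "n - (n - j) = j" "n - j \<in> {?h..n - 1}" using nd by auto
    next
      fix i assume i: "i \<in> {?h..n - 1}"
      then show "n - (n - i) = i" "n - i \<in> {1..n div 2}" using nd by auto
      have "n - (n - i) = i" using i nd by auto
      then show "(-1) ^ (n - (n - i)) * int (m choose (n - i)) = (-1) ^ i * int (m choose (n - i))"
        by simp
    qed
    also have "\<dots> = (\<Sum>j = 1..n div 2. - ((-1) ^ j * int (m choose j)))"
      by (rule sum.cong) (use n in \<open>auto simp: sign_rev\<close>)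
    finally show ?thesis by (simp add: sum_negf)
  qed
  have B: "{1..n div 2} \<union> {?h..n - 1} = {1..n - 1}" "{1..n div 2} \<inter> {?h..n - 1} = {}"
    using nd by auto
  have C: "(\<Sum>i = 1..n - 1. (-1) ^ i * int (m choose i)) = (\<Sum>j = 1..n div 2. (-1) ^ j * int (m choose j)) + (\<Sum>i = ?h..n - 1. (-1) ^ i * int (m choose i))"
    unfolding B(1)[symmetric] by (rule sum.union_disjoint) (use B in auto)
  have D: "(\<Sum>i = 0..n - 1. (-1) ^ i * int (m choose i)) = (\<Sum>i\<le>m. (-1) ^ i * int (m choose i))"
  proof -
    have "(\<Sum>i = 0..n - 1. (-1) ^ i * int (m choose i)) = (\<Sum>i = 0..m. (-1) ^ i * int (m choose i))"
      by (rule sum.mono_neutral_right) (use m in auto)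
    then show ?thesis by (simp add: atLeast0AtMost)
  qed
  have E0: "m = 0 \<Longrightarrow> (\<Sum>i\<le>m. (-1) ^ i * int (m choose i)) = 1" by simp
  have E1: "m \<noteq> 0 \<Longrightarrow> (\<Sum>i\<le>m. (-1) ^ i * int (m choose i)) = 0"
    using choose_alternating_sum[of m] by auto
  have F: "(\<Sum>i = 0..n - 1. (-1) ^ i * int (m choose i)) = 1 + (\<Sum>i = 1..n - 1. (-1) ^ i * int (m choose i))"
  proof -
    have "{0..n - 1} = insert 0 {1..n - 1}" by auto
    then show ?thesis by simp
  qed
  define X where "X = (\<Sum>i = ?h..n - 1. (-1) ^ i * int (m choose i))"
  define Y where "Y = (\<Sum>j = 1..n div 2. (-1) ^ j * int (m choose j))"
  have G: "X + Y = (if m = 0 then 0 else -1)"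
  proof (cases "m = 0")
    case True
    have "X + Y = 0" using C D F E0[OF True] unfolding X_def[symmetric] Y_def[symmetric] by linarith
    then show ?thesis using True by simp
  next
    case False
    have "X + Y = -1" using C D F E1[OF False] unfolding X_def[symmetric] Y_def[symmetric] by linarith
    then show ?thesis using False by simp
  qed
  have H: "(\<Sum>i = ?h..n - 1. (-1) ^ i * (int (m choose i) - int (m choose (n - i))))
      = X - (\<Sum>i = ?h..n - 1. (-1) ^ i * int (m choose (n - i)))"
    unfolding X_def by (simp add: sum_subtractf right_diff_distrib)
  show ?thesis unfolding H A Y_def[symmetric] using G by simp
qed

lemma fact_gaps:
  "sorted (p # xs) \<Longrightarrow> fact p * prod_list (map fact (gaps_from p xs)) * mb p xs = (fact (last (p # xs)) :: nat)"
proof (induction xs arbitrary: p)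
  case Nil
  then show ?case by simp
next
  case (Cons x xs)
  have px: "p \<le> x" and sx: "sorted (x # xs)" using Cons.prems by auto
  have "fact p * prod_list (map fact (gaps_from p (x # xs))) * mb p (x # xs)
      = (fact p * fact (x - p) * (x choose p)) * (prod_list (map fact (gaps_from x xs)) * mb x xs)"
    by (simp add: algebra_simps)
  also have "fact p * fact (x - p) * (x choose p) = (fact x :: nat)"
    by (rule binomial_fact_lemma[OF px])
  also have "fact x * (prod_list (map fact (gaps_from x xs)) * mb x xs) = (fact (last (x # xs)) :: nat)"
    using Cons.IH[OF sx] by (simp add: algebra_simps)
  finally show ?case by simp
qed

lemma sorted_le_last: "sorted xs \<Longrightarrow> x \<in> set xs \<Longrightarrow> x \<le> last xs"
proof (induction xs)
  case Nil then show ?case by simp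
next
  case (Cons a xs)
  show ?case
  proof (cases "xs = []")
    case True then show ?thesis using Cons by simp
  next
    case False
    have "last xs \<in> set xs" using False by simp
    then have "a \<le> last xs" using Cons.prems(1) by auto
    then show ?thesis using Cons False by auto
  qed
qed

lemma max0_Max: "finite S \<Longrightarrow> S \<noteq> {} \<Longrightarrow> max0 S = Max S"
proof -
  assume fin: "finite S" and ne: "S \<noteq> {}"
  define rs where "rs = sorted_list_of_set S"
  have rne: "rs \<noteq> []" unfolding rs_def using fin ne by simp
  have set: "set rs = S" unfolding rs_def using fin by simp
  have srt: "sorted rs" unfolding rs_def by simp
  have "Max S = last rs"
    by (rule Max_eqI[OF fin]) (use sorted_le_last[OF srt] set rne in auto)
  then show ?thesis unfolding max0_def rs_def[symmetric] using rne by simp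
qed

lemma multinom_Mset: "finite S \<Longrightarrow> S \<noteq> {} \<Longrightarrow> multinom S = Mset S"
proof -
  assume fin: "finite S" and ne: "S \<noteq> {}"
  define rs where "rs = sorted_list_of_set S"
  define P :: nat where "P = prod_list (map fact (gaps_from 0 rs))"
  have srt: "sorted (0 # rs)" unfolding rs_def by simp
  have "fact 0 * P * mb 0 rs = fact (last (0 # rs))"
    unfolding P_def by (rule fact_gaps[OF srt])
  then have e: "fact (Max S) = P * Mset S"
    using max0_Max[OF fin ne] unfolding max0_def Mset_def rs_def[symmetric] by simp
  have pos: "0 < prod_list (map fact xs :: nat list)" for xs by (induction xs) auto
  have "P > 0" unfolding P_def by (rule pos)
  then show ?thesis unfolding multinom_def rs_def[symmetric] P_def[symmetric] e by simp
qed

theorem lemma3p7: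
  fixes n :: nat and S :: "nat set"
  assumes "odd n" and "S \<subseteq> {1..n}" and "S \<noteq> {}"
  shows "(\<Sum>i = n div 2 + 1..n - 1. (-1) ^ i * int (n choose i) * fvec n (checkPhi n i) S)
       = int (n choose Max S) * int (multinom S) *
           (\<Sum>j = n div 2 + 1..Max S. (-1) ^ j * int (Max S choose j))
         + (if S = {n} then 1 else 0)"
proof -
  let ?h = "n div 2 + 1"
  have odd: "odd n" and Ssub: "S \<subseteq> {1..n}" and Sne: "S \<noteq> {}" using assms by auto
  have finS: "finite S" using Ssub finite_subset by blast
  have n1: "1 \<le> n" using odd by (cases n) auto
  have rng: "1 \<le> i \<and> i < n" if "i \<in> {?h..n - 1}" for i using that n1 by auto
  have step: "(\<Sum>i = ?h..n - 1. (-1) ^ i * int (n choose i) * fvec n (checkPhi n i) S)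
      = (\<Sum>i = ?h..n - 1. (-1) ^ i * int (n choose i) * (NS n (gL n i) (kL n i) S - NS n (gL n (i - 1)) (kL n (i - 1)) S))"
    by (rule sum.cong) (use rng checkPhi_fvec Ssub in auto)
  show ?thesis
  proof (cases "n \<in> S")
    case False
    define m where "m = max0 S"
    define M where "M = int (Mset S)"
    have mMax: "Max S = m" unfolding m_def using max0_Max[OF finS Sne] by simp
    have mS: "m \<in> S" using Max_in[OF finS Sne] mMax by simp
    have "m \<le> n" using mS Ssub by auto
    then have mn: "m < n" using mS False by (cases "m = n") auto
    have mult: "int (multinom S) = M" unfolding M_def using multinom_Mset[OF finS Sne] by simp
    have "(\<Sum>i = ?h..n - 1. (-1) ^ i * int (n choose i) * (NS n (gL n i) (kL n i) S - NS n (gL n (i - 1)) (kL n (i - 1)) S))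
        = (\<Sum>i = ?h..n - 1. M * int (n choose m) * ((-1) ^ i * int (m choose i)))"
    proof (rule sum.cong)
      fix i assume i: "i \<in> {?h..n - 1}"
      have "NS n (gL n i) (kL n i) S - NS n (gL n (i - 1)) (kL n (i - 1)) S = M * cb (n - i) i m"
        unfolding NS_def M_def m_def using False diff_g[of i n "max0 S"] rng[OF i] by (simp add: right_diff_distrib[symmetric])
      moreover have "int (n choose i) * cb (n - i) i m = int (n choose m) * int (m choose i)"
        using prod1[of i n m] rng[OF i] mn by simp
      ultimately show "(-1) ^ i * int (n choose i) * (NS n (gL n i) (kL n i) S - NS n (gL n (i - 1)) (kL n (i - 1)) S)
          = M * int (n choose m) * ((-1) ^ i * int (m choose i))"
        by (metis (no_types, lifting) mult.assoc mult.left_commute)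
    qed simp
    also have "\<dots> = M * int (n choose m) * (\<Sum>i = ?h..n - 1. (-1) ^ i * int (m choose i))"
      by (simp add: sum_distrib_left)
    also have "(\<Sum>i = ?h..n - 1. (-1) ^ i * int (m choose i)) = (\<Sum>i = ?h..m. (-1) ^ i * int (m choose i))"
      by (rule sum.mono_neutral_right) (use mn in auto)
    moreover have "S \<noteq> {n}" using False by auto
    ultimately show ?thesis unfolding step mMax mult by (simp add: algebra_simps)
  next
    case True
    define S0 where "S0 = S - {n}"
    have fin0: "finite S0" unfolding S0_def using finS by simp
    have lt0: "\<forall>y\<in>S0. y < n" unfolding S0_def using Ssub by auto
    have SS: "S = insert n S0" unfolding S0_def using True by auto
    define m where "m = max0 S0"
    define M0 where "M0 = int (Mset S0)"
    have mn: "m < n"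
    proof (cases "S0 = {}")
      case True then show ?thesis unfolding m_def using n1 by simp
    next
      case False
      then have "m \<in> S0" unfolding m_def using max0_Max[OF fin0 False] Max_in[OF fin0 False] by simp
      then show ?thesis using lt0 by auto
    qed
    have MaxS: "Max S = n" using Ssub True finS by (intro Max_eqI) auto
    have mult: "int (multinom S) = M0 * int (n choose m)"
      unfolding M0_def m_def using multinom_Mset[OF finS Sne] Mset_insert_top[OF fin0 lt0] SS by simp
    have "(\<Sum>i = ?h..n - 1. (-1) ^ i * int (n choose i) * (NS n (gL n i) (kL n i) S - NS n (gL n (i - 1)) (kL n (i - 1)) S))
        = (\<Sum>i = ?h..n - 1. M0 * int (n choose m) * ((-1) ^ i * int (n choose i) + (-1) ^ i * (int (m choose i) - int (m choose (n - i)))))"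
    proof (rule sum.cong)
      fix i assume i: "i \<in> {?h..n - 1}"
      have d: "NS n (gL n i) (kL n i) S - NS n (gL n (i - 1)) (kL n (i - 1)) S
          = M0 * (int (n choose m) + cb (n - i) i m - cb i (n - i) m)"
        unfolding NS_def M0_def m_def S0_def using True diff_k[of i n "max0 (S - {n})"] rng[OF i]
        by (simp add: right_diff_distrib[symmetric])
      have p1: "int (n choose i) * cb (n - i) i m = int (n choose m) * int (m choose i)"
        using prod1[of i n m] rng[OF i] mn by simp
      have p2: "int (n choose i) * cb i (n - i) m = int (n choose m) * int (m choose (n - i))"
        using prod2[of i n m] rng[OF i] mn by simp
      have "(-1) ^ i * int (n choose i) * (NS n (gL n i) (kL n i) S - NS n (gL n (i - 1)) (kL n (i - 1)) S)
          = (-1) ^ i * M0 * (int (n choose i) * int (n choose m) + int (n choose i) * cb (n - i) i m - int (n choose i) * cb i (n - i) m)"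
        unfolding d by (simp add: algebra_simps)
      also have "\<dots> = (-1) ^ i * M0 * (int (n choose i) * int (n choose m) + int (n choose m) * int (m choose i) - int (n choose m) * int (m choose (n - i)))"
        unfolding p1 p2 ..
      also have "\<dots> = M0 * int (n choose m) * ((-1) ^ i * int (n choose i) + (-1) ^ i * (int (m choose i) - int (m choose (n - i))))"
        by (simp add: algebra_simps)
      finally show "(-1) ^ i * int (n choose i) * (NS n (gL n i) (kL n i) S - NS n (gL n (i - 1)) (kL n (i - 1)) S)
          = M0 * int (n choose m) * ((-1) ^ i * int (n choose i) + (-1) ^ i * (int (m choose i) - int (m choose (n - i))))" .
    qed simp
    also have "\<dots> = M0 * int (n choose m) * ((\<Sum>i = ?h..n - 1. (-1) ^ i * int (n choose i))
        + (\<Sum>i = ?h..n - 1. (-1) ^ i * (int (m choose i) - int (m choose (n - i)))))"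
      by (simp only: sum.distrib[symmetric] sum_distrib_left)
    also have "(\<Sum>i = ?h..n - 1. (-1) ^ i * (int (m choose i) - int (m choose (n - i)))) = (if m = 0 then 0 else -1)"
      by (rule core[OF odd mn])
    finally have L: "(\<Sum>i = ?h..n - 1. (-1) ^ i * int (n choose i) * fvec n (checkPhi n i) S)
        = M0 * int (n choose m) * ((\<Sum>i = ?h..n - 1. (-1) ^ i * int (n choose i)) + (if m = 0 then 0 else -1))"
      unfolding step .
    have R: "(\<Sum>j = ?h..n. (-1) ^ j * int (n choose j)) = (\<Sum>i = ?h..n - 1. (-1) ^ i * int (n choose i)) - 1"
    proof -
      have nn: "n = Suc (n - 1)" using n1 by simp
      have hn: "?h \<le> n" using n1 by auto
      have "(\<Sum>j = ?h..n. (-1) ^ j * int (n choose j)) = (\<Sum>i = ?h..n - 1. (-1) ^ i * int (n choose i)) + (-1) ^ n"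
        using hn by (subst nn, subst sum.cl_ivl_Suc) (auto simp flip: nn)
      then show ?thesis using odd by simp
    qed
    show ?thesis
    proof (cases "S0 = {}")
      case True
      then have "S = {n}" using SS by simp
      moreover have "m = 0" "M0 = 1" unfolding m_def M0_def using True by simp_all
      ultimately show ?thesis unfolding L MaxS mult R by simp
    next
      case False
      have "m \<in> S0" unfolding m_def using max0_Max[OF fin0 False] Max_in[OF fin0 False] by simp
      then have m0: "m \<noteq> 0" using Ssub unfolding S0_def by auto
      have "S \<noteq> {n}" using False SS unfolding S0_def by auto
      then show ?thesis unfolding L MaxS mult R using m0 by (simp add: algebra_simps)
    qed
  qed
qed


end
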